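(* Let $a,b$ be integers with $1\le a<b$, and let $G$ be a graph of order $n\ge 3b(b+a+1)/a+7$. If $\rho(G)\ge\rho(H_{n,b})$, then $G$ has all fractional $[a,b]$-factors unless $G\cong H_{n,b}$.
   Context: All graphs are finite, undirected and simple. $\rho(G)$ denotes the spectral radius (largest eigenvalue of the adjacency matrix) of $G$. For graphs $G_1,G_2$, the join $G_1\nabla G_2$ is obtained from the disjoint union $G_1\cup G_2$ by adding all edges between $V(G_1)$ and $V(G_2)$. For integers $2\le b\le n-1$, $H_{n,b}:=K_{b-1}\nabla(K_1\cup K_{n-b})$. For a function $p:V(G)\to\mathbb{Z}^+$, a fractional $p$-factor of $G$ is (the spanning subgraph with edge set $\{e: w(e)>0\}$ of) a function $w:E(G)\to[0,1]$ such that $\sum_{e\in E_G(v)} w(e)=p(v)$ for every $v\in V(G)$, where $E_G(v)$ is the set of edges incident with $v$; $G$ has a fractional $p$-factor if such $w$ exists. For positive integers $a\le b$, $G$ has all fractional $[a,b]$-factors if $G$ has a fractional $p$-factor for every function $p:V(G)\to\mathbb{Z}^+$ with $a\le p(v)\le b$ for all $v\in V(G)$. *)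

theory Defs
  imports Complex_Main
begin

definition simple_graph :: "'a set \<Rightarrow> 'a set set \<Rightarrow> bool" where
  "simple_graph V E \<longleftrightarrow> finite V \<and> (\<forall>e\<in>E. e \<subseteq> V \<and> card e = 2)"

definition adj_eigenvalue :: "'a set \<Rightarrow> 'a set set \<Rightarrow> real \<Rightarrow> bool" where
  "adj_eigenvalue V E \<mu> \<longleftrightarrow>
     (\<exists>x :: 'a \<Rightarrow> real. (\<exists>v\<in>V. x v \<noteq> 0) \<and>
        (\<forall>v\<in>V. (\<Sum>u\<in>{u\<in>V. {u, v} \<in> E}. x u) = \<mu> * x v))"

definition spectral_radius :: "'a set \<Rightarrow> 'a set set \<Rightarrow> real" where
  "spectral_radius V E = Max {\<mu>. adj_eigenvalue V E \<mu>}"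

text \<open>H_{n,b} = K_{b-1} join (K_1 union K_{n-b}) on vertices {0..<n}:
  {0..<b-1} is the clique K_{b-1}, vertex b-1 is K_1, {b..<n} is K_{n-b}.\<close>
definition H_edges :: "nat \<Rightarrow> nat \<Rightarrow> nat set set" where
  "H_edges n b = {{u, v} | u v. u < n \<and> v < n \<and> u \<noteq> v \<and>
                     (u < b - 1 \<or> v < b - 1 \<or> (b \<le> u \<and> b \<le> v))}"

definition graph_iso :: "'a set \<Rightarrow> 'a set set \<Rightarrow> 'b set \<Rightarrow> 'b set set \<Rightarrow> bool" where
  "graph_iso V E W F \<longleftrightarrow>
     (\<exists>f. bij_betw f V W \<and> (\<forall>u\<in>V. \<forall>v\<in>V. {u, v} \<in> E \<longleftrightarrow> {f u, f v} \<in> F))"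

definition has_fractional_p_factor :: "'a set \<Rightarrow> 'a set set \<Rightarrow> ('a \<Rightarrow> nat) \<Rightarrow> bool" where
  "has_fractional_p_factor V E p \<longleftrightarrow>
     (\<exists>w :: 'a set \<Rightarrow> real. (\<forall>e\<in>E. 0 \<le> w e \<and> w e \<le> 1) \<and>
        (\<forall>v\<in>V. (\<Sum>e\<in>{e\<in>E. v \<in> e}. w e) = real (p v)))"

definition all_fractional_factors :: "'a set \<Rightarrow> 'a set set \<Rightarrow> nat \<Rightarrow> nat \<Rightarrow> bool" where
  "all_fractional_factors V E a b \<longleftrightarrow>
     (\<forall>p :: 'a \<Rightarrow> nat. (\<forall>v\<in>V. 0 < p v \<and> a \<le> p v \<and> p v \<le> b) \<longrightarrow> has_fractional_p_factor V E p)"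

end

theory Submission
  imports Defs "HOL-Analysis.Function_Topology" "HOL-Analysis.Convex" "Jordan_Normal_Form.Char_Poly" "HOL-Computational_Algebra.Fundamental_Theorem_Algebra"
begin


lemma swap_incidence:
  fixes V :: "'a set" and E :: "'a set set" and y :: "'a \<Rightarrow> real" and w :: "'a set \<Rightarrow> real"
  assumes "finite V" "finite E" "\<forall>e\<in>E. e \<subseteq> V"
  shows "(\<Sum>v\<in>V. y v * (\<Sum>e\<in>{e\<in>E. v \<in> e}. w e)) = (\<Sum>e\<in>E. w e * (\<Sum>v\<in>e. y v))"
proof -
  have "(\<Sum>v\<in>V. y v * (\<Sum>e\<in>{e\<in>E. v \<in> e}. w e)) = (\<Sum>v\<in>V. \<Sum>e\<in>E. if v \<in> e then y v * w e else 0)"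
    by (simp add: sum_distrib_left sum.inter_filter[OF assms(2), symmetric] if_distrib cong: if_cong)
  also have "\<dots> = (\<Sum>e\<in>E. \<Sum>v\<in>V. if v \<in> e then y v * w e else 0)" by (rule sum.swap)
  also have "\<dots> = (\<Sum>e\<in>E. w e * (\<Sum>v\<in>e. y v))"
  proof (rule sum.cong[OF refl])
    fix e assume "e \<in> E"
    then have "e \<subseteq> V" using assms by auto
    then have "{v\<in>V. v \<in> e} = e" by auto
    then have "(\<Sum>v\<in>V. if v \<in> e then y v * w e else 0) = (\<Sum>v\<in>e. y v * w e)"
      using sum.inter_filter[OF assms(1), of "\<lambda>v. y v * w e" "\<lambda>v. v \<in> e"] by simp
    then show "(\<Sum>v\<in>V. if v \<in> e then y v * w e else 0) = w e * (\<Sum>v\<in>e. y v)"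
      by (simp add: sum_distrib_left mult.commute)
  qed
  finally show ?thesis .
qed

lemma certificate:
  fixes V :: "'a set" and E :: "'a set set" and p :: "'a \<Rightarrow> real"
  assumes fV: "finite V" and fE: "finite E" and sub: "\<forall>e\<in>E. e \<subseteq> V"
    and nof: "\<not> (\<exists>w :: 'a set \<Rightarrow> real. (\<forall>e\<in>E. 0 \<le> w e \<and> w e \<le> 1) \<and>
        (\<forall>v\<in>V. (\<Sum>e\<in>{e\<in>E. v \<in> e}. w e) = p v))"
  shows "\<exists>y. (\<Sum>e\<in>E. max 0 (\<Sum>v\<in>e. y v)) < (\<Sum>v\<in>V. y v * p v)"
proof -
  define B :: "('a set \<Rightarrow> real) set" where "B = PiE UNIV (\<lambda>e. if e \<in> E then {0..1} else {0})"
  define Aw where "Aw = (\<lambda>(w::'a set \<Rightarrow> real) v. (\<Sum>e\<in>{e\<in>E. v \<in> e}. w e))"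
  define \<Phi> where "\<Phi> = (\<lambda>w. \<Sum>v\<in>V. (Aw w v - p v)^2)"
  have compB: "compact B"
  proof -
    have "compactin (product_topology (\<lambda>i. euclidean) UNIV) B"
      unfolding B_def compactin_PiE by auto
    then show ?thesis by (simp add: euclidean_product_topology)
  qed
  have neB: "B \<noteq> {}" unfolding B_def by (auto simp: PiE_eq_empty_iff)
  have contAw: "continuous_on B (\<lambda>w. Aw w v)" for v
    unfolding Aw_def
    by (intro continuous_intros continuous_on_subset[OF continuous_on_product_coordinates]) auto
  have contB: "continuous_on B \<Phi>"
    unfolding \<Phi>_def by (intro continuous_intros contAw)
  obtain ws where wsB: "ws \<in> B" and wsmin: "\<forall>w\<in>B. \<Phi> ws \<le> \<Phi> w"
    using continuous_attains_inf[OF compB neB contB] by blast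
  define r where "r = (\<lambda>v. Aw ws v - p v)"
  have inB: "w \<in> B \<longleftrightarrow> (\<forall>e. (e \<in> E \<longrightarrow> 0 \<le> w e \<and> w e \<le> 1) \<and> (e \<notin> E \<longrightarrow> w e = 0))" for w
    unfolding B_def by (auto simp: PiE_iff)
  have Awlin: "Aw (\<lambda>e. ws e + l * (w e - ws e)) v = Aw ws v + l * (Aw w v - Aw ws v)" for w l v
    unfolding Aw_def by (simp add: sum.distrib sum_subtractf sum_distrib_left algebra_simps)
  have key: "(\<Sum>v\<in>V. r v * (Aw w v - Aw ws v)) \<ge> 0" if wB: "w \<in> B" for w
  proof (rule ccontr)
    define d where "d = (\<lambda>v. Aw w v - Aw ws v)"
    define c where "c = (\<Sum>v\<in>V. r v * d v)"
    define Q where "Q = (\<Sum>v\<in>V. (d v)^2)"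
    assume "\<not> ?thesis"
    then have c0: "c < 0" unfolding c_def d_def by simp
    have Q0: "Q \<ge> 0" unfolding Q_def by (intro sum_nonneg) auto
    define l where "l = min 1 (- c / (Q + 1))"
    have "c / (Q + 1) < 0" using c0 Q0 by (intro divide_neg_pos) auto
    then have l0: "0 < l" "l \<le> 1" unfolding l_def by auto
    have lQ: "l * Q \<le> - c" 
    proof -
      have "l * Q \<le> (- c / (Q + 1)) * Q" unfolding l_def using Q0 by (intro mult_right_mono) auto
      also have "\<dots> \<le> - c" using Q0 c0 by (simp add: divide_simps) 
      finally show ?thesis .
    qed
    define wl where "wl = (\<lambda>e. ws e + l * (w e - ws e))"
    have wlB: "wl \<in> B"
    proof -
      have "(e \<in> E \<longrightarrow> 0 \<le> wl e \<and> wl e \<le> 1) \<and> (e \<notin> E \<longrightarrow> wl e = 0)" for e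
      proof -
        have a: "(e \<in> E \<longrightarrow> 0 \<le> ws e \<and> ws e \<le> 1) \<and> (e \<notin> E \<longrightarrow> ws e = 0)"
          "(e \<in> E \<longrightarrow> 0 \<le> w e \<and> w e \<le> 1) \<and> (e \<notin> E \<longrightarrow> w e = 0)"
          using wsB wB inB by blast+
        have "wl e = (1 - l) * ws e + l * w e" unfolding wl_def by (simp add: algebra_simps)
        moreover have "0 \<le> (1 - l) * ws e + l * w e" if "e \<in> E" using a that l0 by simp
        moreover have "(1 - l) * ws e + l * w e \<le> (1 - l) * 1 + l * 1" if "e \<in> E"
          using a that l0 by (intro add_mono mult_left_mono) auto
        ultimately show ?thesis using a by auto
      qed
      then show ?thesis using inB by blast
    qed
    have "\<Phi> wl = (\<Sum>v\<in>V. (r v + l * d v)^2)"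
      unfolding \<Phi>_def wl_def Awlin r_def d_def by (simp add: algebra_simps)
    also have "\<dots> = (\<Sum>v\<in>V. (r v)^2 + 2*l*(r v * d v) + l^2*(d v)^2)"
      by (rule sum.cong) (auto simp: power2_eq_square algebra_simps)
    also have "\<dots> = \<Phi> ws + 2 * l * c + l^2 * Q"
      unfolding \<Phi>_def c_def Q_def r_def
      by (simp add: sum.distrib sum_distrib_left mult.assoc)
    finally have "\<Phi> wl = \<Phi> ws + l * (2 * c + l * Q)" by (simp add: algebra_simps power2_eq_square)
    moreover have "l * (2 * c + l * Q) < 0" using l0 lQ c0 by (intro mult_pos_neg) auto
    ultimately have "\<Phi> wl < \<Phi> ws" by simp
    with wsmin wlB show False by force
  qed
  define y where "y = (\<lambda>v. p v - Aw ws v)"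
  define wp where "wp = (\<lambda>e. if e \<in> E \<and> (\<Sum>v\<in>e. y v) > 0 then 1 else (0::real))"
  have wpB: "wp \<in> B" unfolding inB wp_def by auto
  have "(\<Sum>v\<in>V. r v * (Aw wp v - Aw ws v)) \<ge> 0" by (rule key[OF wpB])
  then have le1: "(\<Sum>v\<in>V. y v * Aw wp v) \<le> (\<Sum>v\<in>V. y v * Aw ws v)"
    unfolding y_def r_def by (simp add: algebra_simps sum_subtractf sum.distrib)
  have "(\<Sum>v\<in>V. y v * Aw wp v) = (\<Sum>e\<in>E. wp e * (\<Sum>v\<in>e. y v))"
    unfolding Aw_def by (rule swap_incidence[OF fV fE sub])
  also have "\<dots> = (\<Sum>e\<in>E. max 0 (\<Sum>v\<in>e. y v))"
    by (rule sum.cong) (auto simp: wp_def)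
  finally have eq1: "(\<Sum>v\<in>V. y v * Aw wp v) = (\<Sum>e\<in>E. max 0 (\<Sum>v\<in>e. y v))" .
  have "\<exists>v\<in>V. Aw ws v \<noteq> p v"
  proof (rule ccontr)
    assume "\<not> ?thesis"
    then have "(\<forall>e\<in>E. 0 \<le> ws e \<and> ws e \<le> 1) \<and> (\<forall>v\<in>V. (\<Sum>e\<in>{e\<in>E. v \<in> e}. ws e) = p v)"
      using wsB inB unfolding Aw_def by auto
    with nof show False by blast
  qed
  then obtain v0 where v0: "v0 \<in> V" "y v0 \<noteq> 0" unfolding y_def by auto
  have "0 < (\<Sum>v\<in>V. (y v)^2)"
  proof -
    have "(\<Sum>v\<in>V. (y v)^2) \<ge> (y v0)^2"
      using member_le_sum[OF v0(1), of "\<lambda>v. (y v)^2"] fV by auto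
    moreover have "(y v0)^2 > 0" using v0 by simp
    ultimately show ?thesis by linarith
  qed
  also have "(\<Sum>v\<in>V. (y v)^2) = (\<Sum>v\<in>V. y v * p v) - (\<Sum>v\<in>V. y v * Aw ws v)"
  proof -
    have "(\<Sum>v\<in>V. (y v)^2) = (\<Sum>v\<in>V. y v * p v - y v * Aw ws v)"
      by (rule sum.cong) (auto simp: y_def power2_eq_square algebra_simps)
    then show ?thesis by (simp add: sum_subtractf)
  qed
  finally show ?thesis using le1 eq1 by (intro exI[of _ y]) linarith
qed


definition Fpos :: "'a set set \<Rightarrow> ('a \<Rightarrow> real) \<Rightarrow> real" where
  "Fpos E y = (\<Sum>e\<in>E. max 0 (\<Sum>v\<in>e. y v))"
definition Lfun :: "'a set \<Rightarrow> real \<Rightarrow> real \<Rightarrow> ('a \<Rightarrow> real) \<Rightarrow> real" where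
  "Lfun V \<alpha> \<beta> y = (\<Sum>v\<in>V. if y v > 0 then \<beta> * y v else \<alpha> * y v)"
definition sig :: "'a set \<Rightarrow> 'a set \<Rightarrow> 'a \<Rightarrow> real" where
  "sig S T v = (if v \<in> T then 1 else if v \<in> S then -1 else 0)"

lemma per_edge:
  fixes m y1 y2 :: real
  assumes "m > 0" "y1 = 0 \<or> \<bar>y1\<bar> \<ge> m" "y2 = 0 \<or> \<bar>y2\<bar> \<ge> m"
  shows "max 0 (y1 + y2) = m * max 0 (sgn y1 + sgn y2) + max 0 ((y1 - m * sgn y1) + (y2 - m * sgn y2))"
proof -
  consider "y1 > 0" | "y1 = 0" | "y1 < 0" by linarith
  then show ?thesis
  proof cases
    case 1
    then show ?thesis using assms
      by (cases "y2 > 0"; cases "y2 = 0"; cases "y2 < 0") (auto simp: max_def)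
  next
    case 2
    then show ?thesis using assms
      by (cases "y2 > 0"; cases "y2 = 0"; cases "y2 < 0") (auto simp: max_def)
  next
    case 3
    then show ?thesis using assms
      by (cases "y2 > 0"; cases "y2 = 0"; cases "y2 < 0") (auto simp: max_def)
  qed
qed

lemma per_vertex:
  fixes m z \<alpha> \<beta> :: real
  assumes "m > 0" "z = 0 \<or> \<bar>z\<bar> \<ge> m"
  shows "(if z > 0 then \<beta> * z else \<alpha> * z) = m * (if sgn z > 0 then \<beta> * sgn z else \<alpha> * sgn z)
          + (if z - m * sgn z > 0 then \<beta> * (z - m * sgn z) else \<alpha> * (z - m * sgn z))"
proof -
  consider "z > 0" | "z = 0" | "z < 0" by linarith
  then show ?thesis
  proof cases
    case 1
    then have "z \<ge> m" using assms by auto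
    then show ?thesis using 1 by (auto simp: algebra_simps)
  next
    case 3
    then have "z \<le> - m" using assms by auto
    then show ?thesis using 3 assms(1) by (auto simp: algebra_simps)
  qed simp
qed

lemma layer:
  fixes V :: "'a set" and E :: "'a set set" and \<alpha> \<beta> :: real
  assumes fV: "finite V" and fE: "finite E"
    and edges: "\<forall>e\<in>E. \<exists>u v. u \<noteq> v \<and> e = {u, v} \<and> u \<in> V \<and> v \<in> V"
  shows "Fpos E y < Lfun V \<alpha> \<beta> y \<Longrightarrow>
     \<exists>S T. S \<subseteq> V \<and> T \<subseteq> V \<and> S \<inter> T = {} \<and> Fpos E (sig S T) < \<beta> * card T - \<alpha> * card S"
proof (induction "card {v\<in>V. y v \<noteq> 0}" arbitrary: y rule: less_induct)
  case less
  define Z where "Z = {v\<in>V. y v \<noteq> 0}"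
  have fZ: "finite Z" using fV Z_def by auto
  show ?case
  proof (cases "Z = {}")
    case True
    then have "\<forall>v\<in>V. y v = 0" unfolding Z_def by auto
    then have "Lfun V \<alpha> \<beta> y = 0" unfolding Lfun_def by simp
    moreover have "Fpos E y \<ge> 0" unfolding Fpos_def by (intro sum_nonneg) auto
    ultimately show ?thesis using less.prems by simp
  next
    case False
    define m where "m = Min ((\<lambda>v. \<bar>y v\<bar>) ` Z)"
    have "m \<in> (\<lambda>v. \<bar>y v\<bar>) ` Z" unfolding m_def using fZ False by (intro Min_in) auto
    then obtain v0 where v0: "v0 \<in> Z" "m = \<bar>y v0\<bar>" by auto
    have m0: "m > 0" using v0 unfolding Z_def by auto
    have mle: "v \<in> V \<Longrightarrow> y v = 0 \<or> \<bar>y v\<bar> \<ge> m" for v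
    proof -
      assume "v \<in> V"
      show ?thesis
      proof (cases "y v = 0")
        case False
        then have "v \<in> Z" using \<open>v \<in> V\<close> unfolding Z_def by auto
        then show ?thesis unfolding m_def using fZ by (intro disjI2 Min_le) auto
      qed simp
    qed
    define s where "s = (\<lambda>v. sgn (y v))"
    define y' where "y' = (\<lambda>v. y v - m * s v)"
    have Fsplit: "Fpos E y = m * Fpos E s + Fpos E y'"
    proof -
      have "max 0 (\<Sum>v\<in>e. y v) = m * max 0 (\<Sum>v\<in>e. s v) + max 0 (\<Sum>v\<in>e. y' v)" if "e \<in> E" for e
      proof -
        from bspec[OF edges that] obtain u w where uw: "u \<noteq> w" "e = {u, w}" "u \<in> V" "w \<in> V" by blast
        have e1: "(\<Sum>v\<in>e. y v) = y u + y w" "(\<Sum>v\<in>e. sgn (y v)) = sgn (y u) + sgn (y w)"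
          "(\<Sum>v\<in>e. y v - m * sgn (y v)) = (y u - m * sgn (y u)) + (y w - m * sgn (y w))"
          using uw by auto
        show ?thesis unfolding s_def y'_def e1 by (rule per_edge[OF m0 mle[OF uw(3)] mle[OF uw(4)]])
      qed
      then show ?thesis unfolding Fpos_def by (simp add: sum.distrib sum_distrib_left)
    qed
    have Lsplit: "Lfun V \<alpha> \<beta> y = m * Lfun V \<alpha> \<beta> s + Lfun V \<alpha> \<beta> y'"
    proof -
      have "(if y v > 0 then \<beta> * y v else \<alpha> * y v) = m * (if s v > 0 then \<beta> * s v else \<alpha> * s v)
          + (if y' v > 0 then \<beta> * y' v else \<alpha> * y' v)" if "v \<in> V" for v
        unfolding s_def y'_def by (rule per_vertex[OF m0 mle[OF that]])
      then show ?thesis unfolding Lfun_def by (simp add: sum.distrib sum_distrib_left)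
    qed
    show ?thesis
    proof (cases "Fpos E s < Lfun V \<alpha> \<beta> s")
      case True
      define S where "S = {v\<in>V. y v < 0}"
      define T where "T = {v\<in>V. y v > 0}"
      have "Fpos E (sig S T) = Fpos E s"
      proof -
        have "(\<Sum>v\<in>e. sig S T v) = (\<Sum>v\<in>e. s v)" if "e \<in> E" for e
        proof -
          have "e \<subseteq> V" using edges that by auto
          then show ?thesis by (intro sum.cong) (auto simp: sig_def s_def S_def T_def sgn_if)
        qed
        then show ?thesis unfolding Fpos_def by simp
      qed
      moreover have "Lfun V \<alpha> \<beta> s = \<beta> * card T - \<alpha> * card S"
      proof -
        have "Lfun V \<alpha> \<beta> s = (\<Sum>v\<in>V. (if y v > 0 then \<beta> else 0) - (if y v < 0 then \<alpha> else 0))"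
          unfolding Lfun_def by (intro sum.cong) (auto simp: s_def sgn_if)
        also have "\<dots> = \<beta> * card T - \<alpha> * card S"
          by (simp add: sum_subtractf sum.If_cases[OF fV] S_def T_def Int_def conj_commute)
        finally show ?thesis .
      qed
      moreover have "S \<subseteq> V" "T \<subseteq> V" "S \<inter> T = {}" unfolding S_def T_def by auto
      ultimately have "S \<subseteq> V \<and> T \<subseteq> V \<and> S \<inter> T = {} \<and> Fpos E (sig S T) < \<beta> * card T - \<alpha> * card S"
        using True by simp
      then show ?thesis by blast
    next
      case False
      then have "m * Lfun V \<alpha> \<beta> s \<le> m * Fpos E s" using m0 by (intro mult_left_mono) auto
      then have "Fpos E y' < Lfun V \<alpha> \<beta> y'" using Fsplit Lsplit less.prems by linarith
      moreover have cl: "card {v\<in>V. y' v \<noteq> 0} < card {v\<in>V. y v \<noteq> 0}"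
      proof (rule psubset_card_mono)
        show "finite {v\<in>V. y v \<noteq> 0}" using fV by auto
        have "y' v0 = 0" using v0 unfolding y'_def s_def Z_def by (auto simp: sgn_if)
        moreover have "y v = 0 \<Longrightarrow> y' v = 0" for v unfolding y'_def s_def by simp
        ultimately show "{v\<in>V. y' v \<noteq> 0} \<subset> {v\<in>V. y v \<noteq> 0}" using v0 unfolding Z_def by auto
      qed
      ultimately show ?thesis using less.hyps[OF cl] by simp
    qed
  qed
qed


lemma arith_main:
  fixes a b n s t :: real
  assumes a1: "a \<ge> 1" and ab: "b \<ge> a + 1" and nb: "a * n \<ge> 3*b*(b+a+1) + 7*a"
    and s0: "s \<ge> 0" and ta: "t \<ge> a + 1" and stn: "s + t \<le> n" and asb: "a*s + 1 \<le> b*t"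
  shows "t*(t-1) + 2*t*(n-s-t) - 2*(b*t - a*s - 1) \<ge> 2*(n-1)"
proof -
  define r where "r = n - s - t"
  have r0: "r \<ge> 0" using stn r_def by simp
  have goal: "2*r*(t-1) + t*t - (2*b+3)*t + 2*(a-1)*s + 4 \<ge> 0"
  proof (cases "t \<ge> 2*b+3")
    case True
    have "t*t - (2*b+3)*t = t * (t - (2*b+3))" by (simp add: algebra_simps)
    also have "\<dots> \<ge> 0" using True ta a1 by (intro mult_nonneg_nonneg) auto
    finally have "t*t - (2*b+3)*t \<ge> 0" .
    moreover have "2*r*(t-1) \<ge> 0" using r0 ta a1 by simp
    moreover have "2*(a-1)*s \<ge> 0" using a1 s0 by simp
    ultimately show ?thesis by linarith
  next
    case False
    have bt: "b*t \<le> b*(2*b+3)" using False ab a1 by (intro mult_left_mono) auto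
    have at: "a*t \<le> a*(2*b+3)" using False a1 by (intro mult_left_mono) auto
    have "a*r = a*n - a*s - a*t" unfolding r_def by (simp add: algebra_simps)
    then have ar: "a*r \<ge> b*b + a*b + 4*a + 1" using nb asb bt at
      by (simp add: algebra_simps)
    have "r*(t-1) \<ge> r*a" using r0 ta by (intro mult_left_mono) auto
    then have h1: "2*r*(t-1) \<ge> 2*(b*b + a*b + 4*a + 1)" using ar by (simp add: algebra_simps)
    have sq: "4*(t*t - (2*b+3)*t) + (2*b+3)*(2*b+3) \<ge> 0"
    proof -
      have "4*(t*t - (2*b+3)*t) + (2*b+3)*(2*b+3) = (2*t - (2*b+3))^2" by (simp add: power2_eq_square algebra_simps)
      then show ?thesis by simp
    qed
    have h1': "2*(r*t) - 2*r \<ge> 2*(b*b) + 2*(a*b) + 8*a + 2" using h1 by (simp add: algebra_simps)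
    have sq': "4*(t*t) - 8*(b*t) - 12*t + 4*(b*b) + 12*b + 9 \<ge> 0" using sq by (simp add: algebra_simps)
    have as: "a*s \<ge> s" using a1 s0 by (simp add: mult_right_mono[of 1 a s, simplified])
    have abb: "a*b \<ge> b" using a1 ab by (simp add: mult_right_mono[of 1 a b, simplified])
    have bbb: "b*b \<ge> b" using a1 ab by (simp add: mult_right_mono[of 1 b b, simplified])
    have "2*(r*t) - 2*r + t*t - 2*(b*t) - 3*t + 2*(a*s) - 2*s + 4 \<ge> 0"
      using h1' sq' as abb bbb a1 ab by linarith
    then show ?thesis by (simp add: algebra_simps)
  qed
  have "t*(t-1) + 2*t*(n-s-t) - 2*(b*t - a*s - 1) - 2*(n-1) = 2*r*(t-1) + t*t - (2*b+3)*t + 2*(a-1)*s + 4"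
    unfolding r_def by (simp add: algebra_simps)
  with goal show ?thesis by linarith
qed


lemma two_choose2: "2 * (m choose 2) = m * (m - 1)"
proof (induction m)
  case (Suc m)
  have "Suc m choose 2 = (m choose 2) + m" by (simp add: numeral_2_eq_2)
  then show ?case using Suc by (cases m) (auto simp: algebra_simps)
qed simp

definition P2 :: "'a set \<Rightarrow> 'a set set" where "P2 X = {e. e \<subseteq> X \<and> card e = 2}"

lemma card_P2: "finite X \<Longrightarrow> card (P2 X) = card X choose 2"
  unfolding P2_def by (rule n_subsets)

lemma card_incident_le:
  fixes E :: "'a set set"
  assumes cardE: "\<forall>e\<in>E. card e = 2" and xS: "x \<notin> S" and fS: "finite S"
  shows "card {e\<in>E. x \<in> e \<and> e \<inter> S \<noteq> {}} \<le> card S"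
proof -
  have "{e\<in>E. x \<in> e \<and> e \<inter> S \<noteq> {}} \<subseteq> (\<lambda>z. {x, z}) ` S"
  proof
    fix e assume e: "e \<in> {e\<in>E. x \<in> e \<and> e \<inter> S \<noteq> {}}"
    then obtain z where z: "z \<in> e" "z \<in> S" by auto
    have "z \<noteq> x" using z xS by auto
    have "card e = 2" using e cardE by auto
    then obtain u w where uw: "u \<noteq> w" "e = {u, w}" by (auto simp: card_2_iff)
    have "e = {x, z}" using uw e z \<open>z \<noteq> x\<close> by auto
    then show "e \<in> (\<lambda>z. {x, z}) ` S" using z by auto
  qed
  then have "card {e\<in>E. x \<in> e \<and> e \<inter> S \<noteq> {}} \<le> card ((\<lambda>z. {x, z}) ` S)"
    using fS by (intro card_mono) auto
  also have "\<dots> \<le> card S" by (rule card_image_le[OF fS])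
  finally show ?thesis .
qed

lemma count_fail:
  fixes V :: "'a set" and E :: "'a set set" and a b n :: nat and S T :: "'a set"
  assumes sg: "simple_graph V E" and cV: "card V = n" and SV: "S \<subseteq> V" and TV: "T \<subseteq> V"
    and ST: "S \<inter> T = {}"
    and deg: "\<forall>x\<in>V. b \<le> card {e\<in>E. x \<in> e}"
    and fail: "Fpos E (sig S T) < real b * real (card T) - real a * real (card S)"
    and a1: "1 \<le> a" and ab: "a < b" and nb: "real n \<ge> 3 * real b * (real b + real a + 1) / real a + 7"
  shows "card E + (n - 1) \<le> n choose 2"
proof -
  have fV: "finite V" and Esub: "\<forall>e\<in>E. e \<subseteq> V \<and> card e = 2" using sg unfolding simple_graph_def by auto
  have EP: "E \<subseteq> P2 V" using Esub unfolding P2_def by auto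
  have fP: "finite (P2 V)" using fV unfolding P2_def by auto
  have fE: "finite E" using EP fP finite_subset by auto
  have fS: "finite S" and fT: "finite T" using SV TV fV finite_subset by auto
  define s where "s = card S"
  define t where "t = card T"
  define Q where "Q = P2 (V - S) - P2 (V - S - T)"
  have QP: "Q \<subseteq> P2 V" unfolding Q_def P2_def by auto
  have P2sub: "P2 (V - S - T) \<subseteq> P2 (V - S)" unfolding P2_def by auto
  have cVS: "card (V - S) = n - s" using card_Diff_subset[OF fS SV] cV s_def by simp
  have cVST: "card (V - S - T) = n - s - t"
  proof -
    have "T \<subseteq> V - S" using TV ST by auto
    then show ?thesis using card_Diff_subset[OF fT] cVS t_def by simp
  qed
  have stn: "s + t \<le> n"
  proof -
    have "card (S \<union> T) = s + t" using card_Un_disjoint[OF fS fT ST] s_def t_def by simp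
    moreover have "card (S \<union> T) \<le> n" using cV fV SV TV by (metis Un_least card_mono)
    ultimately show ?thesis by simp
  qed
  have cQ: "card Q = ((n - s) choose 2) - ((n - s - t) choose 2)"
  proof -
    have f1: "finite (V - S)" "finite (V - S - T)" using fV by auto
    have f2: "finite (P2 (V - S - T))" using f1 unfolding P2_def by auto
    have "card Q = card (P2 (V - S)) - card (P2 (V - S - T))"
      unfolding Q_def by (rule card_Diff_subset[OF f2 P2sub])
    then show ?thesis using card_P2[OF f1(1)] card_P2[OF f1(2)] cVS cVST by simp
  qed
  have cQr: "2 * real (card Q) = real t * (real t - 1) + 2 * real t * (real n - real s - real t)"
  proof -
    have "2 * ((n - s - t) choose 2) \<le> 2 * ((n - s) choose 2)" unfolding two_choose2 by (intro mult_le_mono) auto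
    then have le: "((n - s - t) choose 2) \<le> ((n - s) choose 2)" by simp
    have "2 * real (card Q) = real (2 * ((n - s) choose 2)) - real (2 * ((n - s - t) choose 2))"
      using cQ le by (simp add: of_nat_diff)
    also have "\<dots> = real ((n - s) * (n - s - 1)) - real ((n - s - t) * (n - s - t - 1))"
      by (simp only: two_choose2)
    also have "\<dots> = real t * (real t - 1) + 2 * real t * (real n - real s - real t)"
    proof (cases "n - s - t = 0")
      case True
      then have nst: "n = s + t" using stn by simp
      then show ?thesis by (cases t) (auto simp: of_nat_diff algebra_simps)
    next
      case False
      define k where "k = n - s - t"
      have nk: "n - s = t + k" "n - s - t = k" "real n = real s + real t + real k" using stn k_def by auto
      have k1: "k \<ge> 1" using False k_def by simp
      have "real (t + k - 1) = real t + real k - 1" using k1 by (simp add: of_nat_diff)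
      moreover have "real (k - 1) = real k - 1" using k1 by (simp add: of_nat_diff)
      ultimately show ?thesis unfolding nk(1,2) nk(3) of_nat_mult by (simp add: algebra_simps)
    qed
    finally show ?thesis .
  qed
  have FposQ: "real (card (E \<inter> Q)) \<le> Fpos E (sig S T)"
  proof -
    have "real (card (E \<inter> Q)) = (\<Sum>e\<in>E \<inter> Q. 1)" by simp
    also have "\<dots> \<le> (\<Sum>e\<in>E \<inter> Q. max 0 (\<Sum>v\<in>e. sig S T v))"
    proof (rule sum_mono)
      fix e assume e: "e \<in> E \<inter> Q"
      then have "card e = 2" using Esub by auto
      then obtain u w where uw: "u \<noteq> w" "e = {u, w}" by (auto simp: card_2_iff)
      have "u \<notin> S" "w \<notin> S" "u \<in> T \<or> w \<in> T" using e uw unfolding Q_def P2_def by auto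
      then show "1 \<le> max 0 (\<Sum>v\<in>e. sig S T v)" using uw by (auto simp: sig_def)
    qed
    also have "\<dots> \<le> Fpos E (sig S T)"
      unfolding Fpos_def using fE by (intro sum_mono2) auto
    finally show ?thesis .
  qed
  have Fdeg: "real t * (real b - real s) \<le> Fpos E (sig S T)"
  proof -
    define E' where "E' = {e\<in>E. e \<inter> S = {}}"
    have fE': "finite E'" using fE E'_def by auto
    have "Fpos E (sig S T) \<ge> (\<Sum>e\<in>E. if e \<inter> S = {} then real (card (e \<inter> T)) else 0)"
      unfolding Fpos_def
    proof (rule sum_mono)
      fix e assume e: "e \<in> E"
      then have "card e = 2" using Esub by auto
      then obtain u w where uw: "u \<noteq> w" "e = {u, w}" by (auto simp: card_2_iff)
      show "(if e \<inter> S = {} then real (card (e \<inter> T)) else 0) \<le> max 0 (\<Sum>v\<in>e. sig S T v)"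
      proof (cases "e \<inter> S = {}")
        case True
        then have "u \<notin> S" "w \<notin> S" using uw by auto
        then show ?thesis using uw True
          by (cases "u \<in> T"; cases "w \<in> T") (auto simp: sig_def card_insert_if)
      qed auto
    qed
    also have "(\<Sum>e\<in>E. if e \<inter> S = {} then real (card (e \<inter> T)) else 0) = (\<Sum>e\<in>E'. real (card (e \<inter> T)))"
      unfolding E'_def by (simp add: sum.inter_filter[OF fE])
    also have "\<dots> = (\<Sum>e\<in>E'. \<Sum>x\<in>T. if x \<in> e then 1 else 0)"
    proof (rule sum.cong[OF refl])
      fix e assume "e \<in> E'"
      have "e \<inter> T = {x\<in>T. x \<in> e}" by auto
      then show "real (card (e \<inter> T)) = (\<Sum>x\<in>T. if x \<in> e then 1 else 0)"
        using sum.inter_filter[OF fT, of "\<lambda>_. (1::real)" "\<lambda>x. x \<in> e"] by simp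
    qed
    also have "\<dots> = (\<Sum>x\<in>T. \<Sum>e\<in>E'. if x \<in> e then 1 else 0)" by (rule sum.swap)
    also have "\<dots> = (\<Sum>x\<in>T. real (card {e\<in>E'. x \<in> e}))"
      using sum.inter_filter[OF fE', of "\<lambda>_. (1::real)"] by simp
    finally have F1: "Fpos E (sig S T) \<ge> (\<Sum>x\<in>T. real (card {e\<in>E'. x \<in> e}))" .
    have "real b - real s \<le> real (card {e\<in>E'. x \<in> e})" if xT: "x \<in> T" for x
    proof -
      have xS: "x \<notin> S" using xT ST by auto
      have "{e\<in>E. x \<in> e} \<subseteq> {e\<in>E'. x \<in> e} \<union> {e\<in>E. x \<in> e \<and> e \<inter> S \<noteq> {}}"
        unfolding E'_def by auto
      then have "card {e\<in>E. x \<in> e} \<le> card ({e\<in>E'. x \<in> e} \<union> {e\<in>E. x \<in> e \<and> e \<inter> S \<noteq> {}})"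
        using fE fE' by (intro card_mono) auto
      also have "\<dots> \<le> card {e\<in>E'. x \<in> e} + card {e\<in>E. x \<in> e \<and> e \<inter> S \<noteq> {}}" by (rule card_Un_le)
      also have "\<dots> \<le> card {e\<in>E'. x \<in> e} + s"
        using card_incident_le[of E x S] Esub xS fS s_def by auto
      finally have "b \<le> card {e\<in>E'. x \<in> e} + s" using deg xT TV by force
      then show ?thesis by linarith
    qed
    then have "(\<Sum>x\<in>T. real b - real s) \<le> (\<Sum>x\<in>T. real (card {e\<in>E'. x \<in> e}))"
      by (intro sum_mono) auto
    then show ?thesis using F1 t_def by simp
  qed
  have F0: "Fpos E (sig S T) \<ge> 0" unfolding Fpos_def by (intro sum_nonneg) auto
  have failst: "Fpos E (sig S T) < real b * real t - real a * real s" using fail s_def t_def by simp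
  have "real a * real s < real t * real s" using Fdeg failst by (simp add: algebra_simps)
  then have "a * s < t * s" by (metis of_nat_less_iff of_nat_mult)
  then have ta: "a + 1 \<le> t" by (cases "s = 0") auto
  have "real (a * s) < real (b * t)" using F0 failst by simp
  then have asb: "a * s + 1 \<le> b * t" by linarith
  have "real (card (E \<inter> Q)) + real (a * s) < real (b * t)" using FposQ failst by simp
  then have "card (E \<inter> Q) + a * s < b * t" by linarith
  then have "card (E \<inter> Q) + a * s + 1 \<le> b * t" by simp
  then have "real (card (E \<inter> Q) + a * s + 1) \<le> real (b * t)" by (simp only: of_nat_le_iff)
  then have EQ: "real (card (E \<inter> Q)) \<le> real b * real t - real a * real s - 1" by simp
  have "E \<subseteq> (P2 V - Q) \<union> (E \<inter> Q)" using EP by auto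
  then have "card E \<le> card ((P2 V - Q) \<union> (E \<inter> Q))" using fP fE by (intro card_mono) auto
  also have "\<dots> \<le> card (P2 V - Q) + card (E \<inter> Q)" by (rule card_Un_le)
  finally have cE: "card E \<le> card (P2 V - Q) + card (E \<inter> Q)" .
  have cPQ: "card (P2 V - Q) = (n choose 2) - card Q"
    using card_Diff_subset[OF finite_subset[OF QP fP] QP] card_P2[OF fV] cV by simp
  have cQle: "card Q \<le> n choose 2" using card_mono[OF fP QP] card_P2[OF fV] cV by simp
  have ar: "real t*(real t-1) + 2*real t*(real n-real s-real t) - 2*(real b*real t - real a*real s - 1) \<ge> 2*(real n-1)"
  proof (rule arith_main)
    show "real a \<ge> 1" using a1 by simp
    show "real b \<ge> real a + 1" using ab by simp
    have "real a * real n \<ge> real a * (3 * real b * (real b + real a + 1) / real a + 7)"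
      using nb by (intro mult_left_mono) auto
    moreover have "real a * (3 * real b * (real b + real a + 1) / real a + 7) = 3*real b*(real b+real a+1) + 7*real a"
      using a1 by (simp add: field_simps)
    ultimately show "real a * real n \<ge> 3*real b*(real b+real a+1) + 7*real a" by linarith
    show "real s \<ge> 0" by simp
    show "real t \<ge> real a + 1" using ta by simp
    show "real s + real t \<le> real n" using stn by simp
    show "real a * real s + 1 \<le> real b * real t" using asb by (metis of_nat_1 of_nat_add of_nat_le_iff of_nat_mult)
  qed
  have "real (card E) \<le> real (n choose 2) - real (card Q) + real (card (E \<inter> Q))"
    using cE cPQ cQle by (simp add: of_nat_diff)
  moreover have "2 * (real n - 1) \<le> 2 * real (card Q) - 2 * (real b * real t - real a * real s - 1)"
    using ar unfolding cQr[symmetric] .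
  moreover note EQ
  ultimately have "real (card E) + (real n - 1) \<le> real (n choose 2)"
    by (smt (verit))
  moreover have "n \<ge> 1" using stn ta by simp
  ultimately show ?thesis by (simp add: of_nat_diff) linarith?
qed


definition nbr :: "'a set \<Rightarrow> 'a set set \<Rightarrow> 'a \<Rightarrow> 'a set" where
  "nbr V E x = {u\<in>V. {u, x} \<in> E}"

lemma card_nbr_eq:
  assumes sg: "simple_graph V E" and xV: "x \<in> V"
  shows "card (nbr V E x) = card {e\<in>E. x \<in> e}"
proof -
  have Esub: "\<forall>e\<in>E. e \<subseteq> V \<and> card e = 2" using sg unfolding simple_graph_def by auto
  have "bij_betw (\<lambda>u. {u, x}) (nbr V E x) {e\<in>E. x \<in> e}"
  proof (rule bij_betwI')
    fix u u' assume "u \<in> nbr V E x" "u' \<in> nbr V E x"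
    then have "{u, x} \<in> E" "{u', x} \<in> E" unfolding nbr_def by auto
    then have "card {u, x} = 2" "card {u', x} = 2" using Esub by auto
    then have "u \<noteq> x" "u' \<noteq> x" by auto
    then show "({u, x} = {u', x}) = (u = u')" by (auto simp: doubleton_eq_iff)
  next
    fix u assume "u \<in> nbr V E x"
    then show "{u, x} \<in> {e\<in>E. x \<in> e}" unfolding nbr_def by auto
  next
    fix e assume e: "e \<in> {e\<in>E. x \<in> e}"
    then have "card e = 2" "e \<subseteq> V" using Esub by auto
    then obtain u w where uw: "u \<noteq> w" "e = {u, w}" by (auto simp: card_2_iff)
    show "\<exists>u\<in>nbr V E x. e = {u, x}"
    proof (cases "u = x")
      case True
      then have "e = {w, x}" using uw by auto
      moreover have "w \<in> V" using uw \<open>e \<subseteq> V\<close> by auto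
      ultimately show ?thesis using e unfolding nbr_def by auto
    next
      case False
      then have "w = x" using e uw by auto
      then have "e = {u, x}" using uw by auto
      moreover have "u \<in> V" using uw \<open>e \<subseteq> V\<close> by auto
      ultimately show ?thesis using e unfolding nbr_def by auto
    qed
  qed
  then show ?thesis by (rule bij_betw_same_card)
qed

lemma handshake:
  assumes sg: "simple_graph V E"
  shows "(\<Sum>v\<in>V. real (card (nbr V E v))) = 2 * real (card E)"
proof -
  have fV: "finite V" and Esub: "\<forall>e\<in>E. e \<subseteq> V \<and> card e = 2" using sg unfolding simple_graph_def by auto
  have fE: "finite E"
  proof -
    have "E \<subseteq> Pow V" using Esub by auto
    then show ?thesis using fV finite_subset by blast
  qed
  have "(\<Sum>v\<in>V. real (card (nbr V E v))) = (\<Sum>v\<in>V. real (card {e\<in>E. v \<in> e}))"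
    using card_nbr_eq[OF sg] by simp
  also have "\<dots> = (\<Sum>v\<in>V. \<Sum>e\<in>E. if v \<in> e then 1 else 0)"
    using sum.inter_filter[OF fE, of "\<lambda>_. (1::real)"] by simp
  also have "\<dots> = (\<Sum>e\<in>E. \<Sum>v\<in>V. if v \<in> e then 1 else 0)" by (rule sum.swap)
  also have "\<dots> = (\<Sum>e\<in>E. 2)"
  proof (rule sum.cong[OF refl])
    fix e assume "e \<in> E"
    then have "e \<subseteq> V" "card e = 2" using Esub by auto
    then have "{v\<in>V. v \<in> e} = e" by auto
    then show "(\<Sum>v\<in>V. if v \<in> e then 1 else 0) = (2::real)"
      using sum.inter_filter[OF fV, of "\<lambda>_. (1::real)" "\<lambda>v. v \<in> e"] \<open>card e = 2\<close> by simp
  qed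
  finally show ?thesis by simp
qed

lemma hong:
  assumes sg: "simple_graph V E" and cV: "card V = n"
    and deg1: "\<forall>v\<in>V. 1 \<le> card (nbr V E v)"
    and ev: "adj_eigenvalue V E \<mu>"
  shows "\<mu>^2 \<le> 2 * real (card E) - real n + 1"
proof -
  have fV: "finite V" and Esub: "\<forall>e\<in>E. e \<subseteq> V \<and> card e = 2" using sg unfolding simple_graph_def by auto
  obtain x where xnz: "\<exists>v\<in>V. x v \<noteq> 0" and eq: "\<forall>v\<in>V. (\<Sum>u\<in>nbr V E v. x u) = \<mu> * x v"
    using ev unfolding adj_eigenvalue_def nbr_def by blast
  define d where "d = (\<lambda>v. real (card (nbr V E v)))"
  define X where "X = (\<Sum>v\<in>V. (x v)^2)"
  have X0: "X > 0"
  proof -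
    obtain v0 where v0: "v0 \<in> V" "x v0 \<noteq> 0" using xnz by auto
    have "(x v0)^2 \<le> X" unfolding X_def using member_le_sum[OF v0(1), of "\<lambda>v. (x v)^2"] fV by auto
    moreover have "(x v0)^2 > 0" using v0 by simp
    ultimately show ?thesis by linarith
  qed
  have adjsym: "{u, v} \<in> E \<longleftrightarrow> {v, u} \<in> E" for u v by (simp add: insert_commute)
  have nbrsum: "(\<Sum>u\<in>nbr V E v. f u) = (\<Sum>u\<in>V. if {u, v} \<in> E then f u else 0)" for f :: "'a \<Rightarrow> real" and v
    unfolding nbr_def using sum.inter_filter[OF fV] by simp
  have step1: "(\<mu> * x v)^2 \<le> d v * (\<Sum>u\<in>nbr V E v. (x u)^2)" if "v \<in> V" for v
  proof -
    have "(\<mu> * x v)^2 = (\<Sum>u\<in>nbr V E v. 1 * x u)^2" using eq that by simp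
    also have "\<dots> \<le> (\<Sum>u\<in>nbr V E v. 1^2) * (\<Sum>u\<in>nbr V E v. (x u)^2)"
      by (rule Cauchy_Schwarz_ineq_sum)
    also have "\<dots> = d v * (\<Sum>u\<in>nbr V E v. (x u)^2)" unfolding d_def by simp
    finally show ?thesis .
  qed
  have "\<mu>^2 * X = (\<Sum>v\<in>V. (\<mu> * x v)^2)" unfolding X_def by (simp add: sum_distrib_left power_mult_distrib)
  also have "\<dots> \<le> (\<Sum>v\<in>V. d v * (\<Sum>u\<in>nbr V E v. (x u)^2))" by (intro sum_mono step1)
  also have "\<dots> = (\<Sum>v\<in>V. \<Sum>u\<in>V. if {u, v} \<in> E then d v * (x u)^2 else 0)"
    by (simp add: nbrsum sum_distrib_left if_distrib cong: if_cong)
  also have "\<dots> = (\<Sum>u\<in>V. \<Sum>v\<in>V. if {u, v} \<in> E then d v * (x u)^2 else 0)" by (rule sum.swap)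
  also have "\<dots> = (\<Sum>u\<in>V. (x u)^2 * (\<Sum>v\<in>nbr V E u. d v))"
    by (simp add: nbrsum sum_distrib_left adjsym if_distrib mult.commute cong: if_cong)
  also have "\<dots> \<le> (\<Sum>u\<in>V. (x u)^2 * (2 * real (card E) - real n + 1))"
  proof (rule sum_mono)
    fix u assume uV: "u \<in> V"
    have "u \<notin> nbr V E u"
    proof
      assume "u \<in> nbr V E u"
      then have "{u} \<in> E" unfolding nbr_def by auto
      then show False using Esub by fastforce
    qed
    have NV: "nbr V E u \<subseteq> V" unfolding nbr_def by auto
    have fN: "finite (nbr V E u)" using NV fV finite_subset by auto
    have "(\<Sum>v\<in>V. d v) = (\<Sum>v\<in>nbr V E u. d v) + (\<Sum>v\<in>V - nbr V E u. d v)"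
      using sum.subset_diff[OF NV fV, of d] by simp
    moreover have "(\<Sum>v\<in>V - nbr V E u. d v) \<ge> real n - 1"
    proof -
      have spl: "V - nbr V E u = insert u (V - nbr V E u - {u})" using uV \<open>u \<notin> nbr V E u\<close> by auto
      have "(\<Sum>v\<in>V - nbr V E u. d v) = d u + (\<Sum>v\<in>V - nbr V E u - {u}. d v)"
        by (subst spl, subst sum.insert) (use fV in auto)
      moreover have "(\<Sum>v\<in>V - nbr V E u - {u}. d v) \<ge> (\<Sum>v\<in>V - nbr V E u - {u}. 1)"
        using deg1 unfolding d_def by (intro sum_mono) auto
      moreover have "card (V - nbr V E u - {u}) = n - card (nbr V E u) - 1"
      proof -
        have "card (V - nbr V E u) = n - card (nbr V E u)" using card_Diff_subset[OF fN NV] cV by simp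
        then show ?thesis using uV \<open>u \<notin> nbr V E u\<close> by (simp add: card_Diff_singleton)
      qed
      moreover have "card (nbr V E u) + 1 \<le> n"
      proof -
        have "card (insert u (nbr V E u)) \<le> card V" using uV NV fV by (intro card_mono) auto
        then show ?thesis using \<open>u \<notin> nbr V E u\<close> fN cV by simp
      qed
      ultimately show ?thesis unfolding d_def by (simp add: of_nat_diff)
    qed
    moreover have "(\<Sum>v\<in>V. d v) = 2 * real (card E)" unfolding d_def by (rule handshake[OF sg])
    ultimately have "(\<Sum>v\<in>nbr V E u. d v) \<le> 2 * real (card E) - real n + 1" by linarith
    then show "(x u)^2 * (\<Sum>v\<in>nbr V E u. d v) \<le> (x u)^2 * (2 * real (card E) - real n + 1)"
      by (intro mult_left_mono) auto
  qed
  also have "\<dots> = (2 * real (card E) - real n + 1) * X" unfolding X_def by (simp add: sum_distrib_right mult.commute)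
  finally have "\<mu>^2 * X \<le> (2 * real (card E) - real n + 1) * X" .
  then show ?thesis using X0 by simp
qed


lemma my_card_finite_spectrum: assumes A: "(A :: 'a :: field mat) \<in> carrier_mat n n"
  shows "finite (Collect (eigenvalue A))"
proof -
  define CP where "CP = char_poly A"
  have id: "Collect (eigenvalue A) = { k. poly CP k = 0}"
    unfolding CP_def eigenvalue_root_char_poly[OF A] by auto
  from degree_monic_char_poly[OF A] have c: "coeff CP n = 1"
    unfolding CP_def by auto
  from c have "CP \<noteq> 0" by auto
  from poly_roots_finite[OF this]
  show ?thesis unfolding id .
qed

lemma my_spectrum_non_empty: assumes A: "(A :: complex mat) \<in> carrier_mat n n"
  and n: "n > 0"
  shows "Collect (eigenvalue A) \<noteq> {}"
proof -
  define CP where "CP = char_poly A"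
  have id: "Collect (eigenvalue A) = { k. poly CP k = 0}"
    unfolding CP_def eigenvalue_root_char_poly[OF A] by auto
  from degree_monic_char_poly[OF A] have d: "degree CP > 0" using n
    unfolding CP_def by auto
  hence "\<not> constant (poly CP)" by (simp add: constant_degree)
  from fundamental_theorem_of_algebra[OF this] show ?thesis unfolding id by auto
qed


lemma mat_mult_entry:
  assumes "i < n" "v \<in> carrier_vec n"
  shows "(mat n n (\<lambda>(i,j). c i j) *\<^sub>v v) $ i = (\<Sum>j\<in>{0..<n}. c i j * v $ j)"
  using assms by (simp add: scalar_prod_def)

lemma eig_finite_nonempty:
  fixes V :: "'a set" and E :: "'a set set"
  assumes fV: "finite V" and ne: "V \<noteq> {}"
  shows "finite {\<mu>. adj_eigenvalue V E \<mu>} \<and> {\<mu>. adj_eigenvalue V E \<mu>} \<noteq> {}"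
proof -
  define n where "n = card V"
  obtain f where bij: "bij_betw f {0..<n} V" using ex_bij_betw_nat_finite[OF fV] n_def by blast
  have n0: "n > 0" using fV ne n_def by (simp add: card_gt_0_iff)
  have reidx: "(\<Sum>j\<in>{0..<n}. g (f j)) = (\<Sum>u\<in>V. g u)" for g :: "'a \<Rightarrow> 'b::comm_monoid_add"
    by (rule sum.reindex_bij_betw[OF bij])
  have fin: "f i \<in> V" if "i < n" for i using bij that by (auto simp: bij_betw_def)
  have surj: "\<exists>i<n. f i = u" if "u \<in> V" for u using bij that by (force simp: bij_betw_def)
  define c :: "nat \<Rightarrow> nat \<Rightarrow> real" where "c = (\<lambda>i j. if {f i, f j} \<in> E then 1 else 0)"
  define A :: "real mat" where "A = mat n n (\<lambda>(i,j). c i j)"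
  have A: "A \<in> carrier_mat n n" unfolding A_def by simp
  have nsum: "(\<Sum>u\<in>{u\<in>V. {u, f i} \<in> E}. x u) = (\<Sum>j\<in>{0..<n}. c i j * x (f j))" for x :: "'a \<Rightarrow> real" and i
  proof -
    have "(\<Sum>u\<in>{u\<in>V. {u, f i} \<in> E}. x u) = (\<Sum>u\<in>V. if {f i, u} \<in> E then x u else 0)"
      using sum.inter_filter[OF fV] by (simp add: insert_commute)
    also have "\<dots> = (\<Sum>j\<in>{0..<n}. c i j * x (f j))"
      unfolding reidx[symmetric, of "\<lambda>u. if {f i, u} \<in> E then x u else 0"] c_def by (intro sum.cong) auto
    finally show ?thesis .
  qed
  have sub: "{\<mu>. adj_eigenvalue V E \<mu>} \<subseteq> Collect (eigenvalue A)"
  proof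
    fix \<mu> assume "\<mu> \<in> {\<mu>. adj_eigenvalue V E \<mu>}"
    then obtain x where xnz: "\<exists>v\<in>V. x v \<noteq> 0" and eq: "\<forall>v\<in>V. (\<Sum>u\<in>{u\<in>V. {u, v} \<in> E}. x u) = \<mu> * x v"
      unfolding adj_eigenvalue_def by blast
    define w where "w = vec n (\<lambda>i. x (f i))"
    have wc: "w \<in> carrier_vec n" unfolding w_def by simp
    have "w \<noteq> 0\<^sub>v n"
    proof
      assume w0: "w = 0\<^sub>v n"
      obtain u where "u \<in> V" "x u \<noteq> 0" using xnz by auto
      then obtain i where "i < n" "f i = u" using surj by blast
      then have "w $ i \<noteq> 0" unfolding w_def using \<open>x u \<noteq> 0\<close> by simp
      then show False using w0 \<open>i < n\<close> by simp
    qed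
    moreover have "A *\<^sub>v w = \<mu> \<cdot>\<^sub>v w"
    proof (rule eq_vecI)
      fix i assume "i < dim_vec (\<mu> \<cdot>\<^sub>v w)"
      then have i: "i < n" unfolding w_def by simp
      have "(A *\<^sub>v w) $ i = (\<Sum>j\<in>{0..<n}. c i j * w $ j)" unfolding A_def by (rule mat_mult_entry[OF i wc])
      also have "\<dots> = (\<Sum>j\<in>{0..<n}. c i j * x (f j))" unfolding w_def by (intro sum.cong) auto
      also have "\<dots> = \<mu> * x (f i)"
      proof -
        have "(\<Sum>u\<in>{u\<in>V. {u, f i} \<in> E}. x u) = \<mu> * x (f i)" using eq fin[OF i] by blast
        then show ?thesis using nsum by simp
      qed
      finally show "(A *\<^sub>v w) $ i = (\<mu> \<cdot>\<^sub>v w) $ i" using i unfolding w_def by simp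
    qed (simp add: A_def w_def)
    ultimately have "eigenvalue A \<mu>" unfolding eigenvalue_def eigenvector_def using wc A_def by auto
    then show "\<mu> \<in> Collect (eigenvalue A)"  by simp
  qed
  have finS: "finite {\<mu>. adj_eigenvalue V E \<mu>}" using my_card_finite_spectrum[OF A] sub finite_subset by blast
  define AC :: "complex mat" where "AC = map_mat complex_of_real A"
  have AC: "AC \<in> carrier_mat n n" unfolding AC_def using A by simp
  obtain lam where "lam \<in> Collect (eigenvalue AC)" using my_spectrum_non_empty[OF AC n0] by blast
  then obtain v where vc: "v \<in> carrier_vec n" and vnz: "v \<noteq> 0\<^sub>v n" and veq: "AC *\<^sub>v v = lam \<cdot>\<^sub>v v"
    unfolding eigenvalue_def eigenvector_def using AC by auto
  have ACdef: "AC = mat n n (\<lambda>(i,j). complex_of_real (c i j))"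
    unfolding AC_def A_def by (intro eq_matI) auto
  have ceq: "(\<Sum>j\<in>{0..<n}. complex_of_real (c i j) * v $ j) = lam * v $ i" if "i < n" for i
  proof -
    have "(AC *\<^sub>v v) $ i = (\<Sum>j\<in>{0..<n}. complex_of_real (c i j) * v $ j)"
      unfolding ACdef by (rule mat_mult_entry[OF that vc])
    then show ?thesis using veq that vc by simp
  qed
  have csym: "c i j = c j i" for i j unfolding c_def by (simp add: insert_commute)
  define N where "N = (\<Sum>i\<in>{0..<n}. cnj (v $ i) * v $ i)"
  define M where "M = (\<Sum>i\<in>{0..<n}. \<Sum>j\<in>{0..<n}. complex_of_real (c i j) * (cnj (v $ i) * v $ j))"
  have "lam * N = M"
    unfolding N_def M_def sum_distrib_left
  proof (rule sum.cong[OF refl])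
    fix i assume "i \<in> {0..<n}"
    then have "lam * v $ i = (\<Sum>j\<in>{0..<n}. complex_of_real (c i j) * v $ j)" using ceq by simp
    then have "lam * (cnj (v $ i) * v $ i) = cnj (v $ i) * (\<Sum>j\<in>{0..<n}. complex_of_real (c i j) * v $ j)"
      by (simp add: algebra_simps)
    then show "lam * (cnj (v $ i) * v $ i) = (\<Sum>j\<in>{0..<n}. complex_of_real (c i j) * (cnj (v $ i) * v $ j))"
      by (simp add: sum_distrib_left algebra_simps)
  qed
  have "cnj M = M"
  proof -
    have "cnj M = (\<Sum>i\<in>{0..<n}. \<Sum>j\<in>{0..<n}. complex_of_real (c i j) * (v $ i * cnj (v $ j)))"
      unfolding M_def by (simp add: mult.commute)
    also have "\<dots> = (\<Sum>j\<in>{0..<n}. \<Sum>i\<in>{0..<n}. complex_of_real (c i j) * (v $ i * cnj (v $ j)))"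
      by (rule sum.swap)
    also have "\<dots> = M" unfolding M_def by (intro sum.cong refl) (simp add: csym mult.commute)
    finally show ?thesis .
  qed
  then have ImM: "Im M = 0" by (metis Reals_cnj_iff complex_is_Real_iff)
  have Nreal: "N = complex_of_real (\<Sum>i\<in>{0..<n}. (cmod (v $ i))^2)"
    unfolding N_def of_real_sum
  proof (rule sum.cong[OF refl])
    fix i show "cnj (v $ i) * v $ i = complex_of_real ((cmod (v $ i))^2)"
      using complex_norm_square[of "v $ i"] by (simp add: mult.commute)
  qed
  have Npos: "(\<Sum>i\<in>{0..<n}. (cmod (v $ i))^2) > 0"
  proof -
    obtain i where i: "i < n" "v $ i \<noteq> 0" using vnz vc by (metis carrier_vecD eq_vecI index_zero_vec(1) index_zero_vec(2))
    have "(cmod (v $ i))^2 \<le> (\<Sum>i\<in>{0..<n}. (cmod (v $ i))^2)"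
      using member_le_sum[of i "{0..<n}" "\<lambda>i. (cmod (v $ i))^2"] i by auto
    moreover have "(cmod (v $ i))^2 > 0" using i by simp
    ultimately show ?thesis by linarith
  qed
  have "Im lam = 0"
  proof -
    have "Im (lam * N) = Im lam * (\<Sum>i\<in>{0..<n}. (cmod (v $ i))^2)" unfolding Nreal by simp
    then show ?thesis using \<open>lam * N = M\<close> ImM Npos by simp
  qed
  then obtain r where lamr: "lam = complex_of_real r" by (metis complex_is_Real_iff Reals_cases)
  have reeq: "(\<Sum>j\<in>{0..<n}. c i j * g (v $ j)) = r * g (v $ i)"
    if "i < n" and g: "g = Re \<or> g = Im" for i g
  proof -
    have e: "(\<Sum>j\<in>{0..<n}. complex_of_real (c i j) * v $ j) = complex_of_real r * v $ i"
      using ceq[OF that(1)] lamr by simp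
    from g show ?thesis
    proof
      assume "g = Re"
      then show ?thesis using arg_cong[OF e, of Re] by (simp add: Re_sum)
    next
      assume "g = Im"
      then show ?thesis using arg_cong[OF e, of Im] by (simp add: Im_sum)
    qed
  qed
  obtain i0 where i0: "i0 < n" "v $ i0 \<noteq> 0" using vnz vc by (metis carrier_vecD eq_vecI index_zero_vec(1) index_zero_vec(2))
  obtain g where g: "g = Re \<or> g = Im" and gnz: "g (v $ i0) \<noteq> 0"
    using i0 complex_eqI[of "v $ i0" 0] by auto
  define finv where "finv = inv_into {0..<n} f"
  have finv: "finv u < n" "f (finv u) = u" if "u \<in> V" for u
    using bij that unfolding finv_def bij_betw_def by (auto intro: inv_into_into f_inv_into_f)
  define x where "x = (\<lambda>u. g (v $ finv u))"
  have "adj_eigenvalue V E r"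
    unfolding adj_eigenvalue_def
  proof (intro exI[of _ x] conjI ballI)
    have "finv (f i0) = i0" using bij i0 unfolding finv_def bij_betw_def by (auto intro: inv_into_f_f)
    then show "\<exists>v\<in>V. x v \<noteq> 0" using fin[OF i0(1)] gnz unfolding x_def by (intro bexI[of _ "f i0"]) auto
  next
    fix u assume uV: "u \<in> V"
    define i where "i = finv u"
    have i: "i < n" "f i = u" using finv[OF uV] i_def by auto
    have xf: "x (f j) = g (v $ j)" if "j < n" for j
    proof -
      have "finv (f j) = j" using bij that unfolding finv_def bij_betw_def by (auto intro: inv_into_f_f)
      then show ?thesis unfolding x_def by simp
    qed
    have "(\<Sum>w\<in>{w\<in>V. {w, u} \<in> E}. x w) = (\<Sum>j\<in>{0..<n}. c i j * x (f j))" by (subst i(2)[symmetric], rule nsum)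
    also have "\<dots> = (\<Sum>j\<in>{0..<n}. c i j * g (v $ j))" by (intro sum.cong) (auto simp: xf)
    also have "\<dots> = r * g (v $ i)" by (rule reeq[OF i(1) g])
    also have "\<dots> = r * x u" unfolding x_def i_def by simp
    finally show "(\<Sum>w\<in>{w\<in>V. {w, u} \<in> E}. x w) = r * x u" .
  qed
  then show ?thesis using finS by auto
qed


lemma H_adj:
  "{u, v} \<in> H_edges n b \<longleftrightarrow> u < n \<and> v < n \<and> u \<noteq> v \<and> (u < b - 1 \<or> v < b - 1 \<or> (b \<le> u \<and> b \<le> v))"
proof
  assume "{u, v} \<in> H_edges n b"
  then obtain u' v' where e: "{u, v} = {u', v'}" "u' < n" "v' < n" "u' \<noteq> v'"
    "u' < b - 1 \<or> v' < b - 1 \<or> (b \<le> u' \<and> b \<le> v')" unfolding H_edges_def by auto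
  from e(1) have "(u = u' \<and> v = v') \<or> (u = v' \<and> v = u')" by (auto simp: doubleton_eq_iff)
  then show "u < n \<and> v < n \<and> u \<noteq> v \<and> (u < b - 1 \<or> v < b - 1 \<or> (b \<le> u \<and> b \<le> v))" using e by auto
next
  assume "u < n \<and> v < n \<and> u \<noteq> v \<and> (u < b - 1 \<or> v < b - 1 \<or> (b \<le> u \<and> b \<le> v))"
  then show "{u, v} \<in> H_edges n b" unfolding H_edges_def by blast
qed

lemma H_simple: "simple_graph {0..<n} (H_edges n b)"
  unfolding simple_graph_def H_edges_def by auto

definition yH :: "nat \<Rightarrow> nat \<Rightarrow> real \<Rightarrow> nat \<Rightarrow> real" where
  "yH n b \<theta> u = (if u < b - 1 then 1 else if u = b - 1 then (real b - 1) / \<theta> else (real b - 1) / (\<theta> - real n + real b + 1))"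

definition Hcub :: "nat \<Rightarrow> nat \<Rightarrow> real \<Rightarrow> real" where
  "Hcub n b \<theta> = (\<theta> - real b + 2) * \<theta> * (\<theta> - real n + real b + 1) - (real b - 1) * (\<theta> - real n + real b + 1)
      - (real n - real b) * (real b - 1) * \<theta>"

lemma Hcub_root:
  assumes "2 \<le> b" "b + 1 \<le> n"
  shows "\<exists>\<theta>. \<theta> > real n - 2 \<and> Hcub n b \<theta> = 0"
proof -
  have c: "continuous_on {real n - 2 .. real n} (Hcub n b)" unfolding Hcub_def by (intro continuous_intros)
  have f1: "Hcub n b (real n - 2) = -((real b - 1)^2)" unfolding Hcub_def by (simp add: power2_eq_square algebra_simps)
  have f2: "Hcub n b (real n) = real n * (2 * real n + 2) - (real b)^2 + 1"
    unfolding Hcub_def by (simp add: power2_eq_square algebra_simps)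
  have "real b \<le> real n" using assms by simp
  then have "(real b)^2 \<le> (real n)^2" using assms by (intro power_mono) auto
  moreover have "real n * (2 * real n + 2) = 2*(real n)^2 + 2 * real n" by (simp add: power2_eq_square algebra_simps)
  moreover have "(real n)^2 \<ge> 0" by simp
  ultimately have f2': "Hcub n b (real n) \<ge> 0" unfolding f2 by linarith
  have f1': "Hcub n b (real n - 2) \<le> 0" unfolding f1 by simp
  obtain x where x: "real n - 2 \<le> x" "x \<le> real n" "Hcub n b x = 0"
    using IVT'[of "Hcub n b" "real n - 2" 0 "real n", OF f1' f2' _ c] by auto
  have "x \<noteq> real n - 2" using x(3) f1 assms by auto
  then show ?thesis using x by (intro exI[of _ x]) auto
qed

lemma sum_const_on:
  assumes "\<And>u. u \<in> A \<Longrightarrow> f u = c" "finite A"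
  shows "sum f A = real (card A) * (c::real)"
  using assms by simp

lemma H_eigen:
  assumes b2: "2 \<le> b" and bn: "b + 1 \<le> n" and th: "\<theta> > real n - 2" and root: "Hcub n b \<theta> = 0"
  shows "(\<forall>u<n. yH n b \<theta> u > 0) \<and>
         (\<forall>v<n. (\<Sum>u\<in>{u\<in>{0..<n}. {u, v} \<in> H_edges n b}. yH n b \<theta> u) = \<theta> * yH n b \<theta> v)"
proof -
  define y2 where "y2 = (real b - 1) / \<theta>"
  define D where "D = \<theta> - real n + real b + 1"
  define y3 where "y3 = (real b - 1) / D"
  have D: "D > real b - 1" unfolding D_def using th by simp
  have bb: "real b - 1 \<ge> 1" using b2 by simp
  have thp: "\<theta> > 0" using th bn b2 by simp
  have Dp: "D > 0" using D bb by simp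
  have y: "yH n b \<theta> u = (if u < b - 1 then 1 else if u = b - 1 then y2 else y3)" for u
    unfolding yH_def y2_def y3_def D_def by simp
  have pos: "\<forall>u<n. yH n b \<theta> u > 0" unfolding y y2_def y3_def using thp Dp bb by auto
  have s1: "(\<Sum>u\<in>{0..<b-1}. yH n b \<theta> u) = real b - 1"
  proof -
    have "(\<Sum>u\<in>{0..<b-1}. yH n b \<theta> u) = (\<Sum>u\<in>{0..<b-1}. 1)" by (rule sum.cong) (use b2 in \<open>auto simp: y\<close>)
    then show ?thesis using b2 by (simp add: of_nat_diff)
  qed
  have s3: "(\<Sum>u\<in>{b..<n}. yH n b \<theta> u) = (real n - real b) * y3"
  proof -
    have "(\<Sum>u\<in>{b..<n}. yH n b \<theta> u) = (\<Sum>u\<in>{b..<n}. y3)" by (rule sum.cong) (use b2 in \<open>auto simp: y\<close>)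
    then show ?thesis using bn by (simp add: of_nat_diff)
  qed
  have s3': "(\<Sum>u\<in>{b..<n} - {v}. yH n b \<theta> u) = (real n - real b - 1) * y3" if "b \<le> v" "v < n" for v
  proof -
    have "(\<Sum>u\<in>{b..<n} - {v}. yH n b \<theta> u) = (\<Sum>u\<in>{b..<n} - {v}. y3)" by (rule sum.cong) (use b2 in \<open>auto simp: y\<close>)
    then show ?thesis using bn that by (simp add: of_nat_diff)
  qed
  have ydef3: "\<theta> * y3 = (real b - 1) + (real n - real b - 1) * y3"
  proof -
    have "\<theta> * y3 - (real n - real b - 1) * y3 = D * y3" unfolding D_def by (simp add: algebra_simps)
    also have "\<dots> = real b - 1" unfolding y3_def using Dp by simp
    finally show ?thesis by simp
  qed
  have key1: "\<theta> = (real b - 2) + y2 + (real n - real b) * y3"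
  proof -
    have HD: "Hcub n b \<theta> = (\<theta> - real b + 2)*\<theta>*D - (real b - 1)*D - (real n - real b)*(real b - 1)*\<theta>"
      unfolding Hcub_def D_def by simp
    have t2: "\<theta> * y2 = real b - 1" unfolding y2_def using thp by simp
    have d3: "D * y3 = real b - 1" unfolding y3_def using Dp by simp
    have "\<theta> * D * (\<theta> - ((real b - 2) + y2 + (real n - real b) * y3))
        = \<theta>*\<theta>*D - (real b - 2)*\<theta>*D - (\<theta>*y2)*D - (real n - real b)*\<theta>*(D*y3)"
      by (simp add: algebra_simps)
    also have "\<dots> = Hcub n b \<theta>" unfolding HD t2 d3 by (simp add: algebra_simps)
    finally have "\<theta> * D * (\<theta> - ((real b - 2) + y2 + (real n - real b) * y3)) = Hcub n b \<theta>" .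
    then have "\<theta> * D * (\<theta> - ((real b - 2) + y2 + (real n - real b) * y3)) = 0" using root by simp
    then show ?thesis using thp Dp by simp
  qed
  have eqs: "(\<Sum>u\<in>{u\<in>{0..<n}. {u, v} \<in> H_edges n b}. yH n b \<theta> u) = \<theta> * yH n b \<theta> v" if vn: "v < n" for v
  proof -
    consider (c1) "v < b - 1" | (c2) "v = b - 1" | (c3) "b \<le> v" by linarith
    then show ?thesis
    proof cases
      case c1
      have N: "{u\<in>{0..<n}. {u, v} \<in> H_edges n b} = ({0..<b-1} - {v}) \<union> {b-1} \<union> {b..<n}"
        using c1 vn bn by (auto simp: H_adj)
      have "(\<Sum>u\<in>({0..<b-1} - {v}) \<union> {b-1} \<union> {b..<n}. yH n b \<theta> u)
          = (\<Sum>u\<in>{0..<b-1} - {v}. yH n b \<theta> u) + yH n b \<theta> (b-1) + (\<Sum>u\<in>{b..<n}. yH n b \<theta> u)"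
        using b2 by (subst sum.union_disjoint, auto)+
      also have "(\<Sum>u\<in>{0..<b-1} - {v}. yH n b \<theta> u) = real b - 2"
      proof -
        have "(\<Sum>u\<in>{0..<b-1} - {v}. yH n b \<theta> u) = (\<Sum>u\<in>{0..<b-1} - {v}. 1)" by (rule sum.cong) (use b2 in \<open>auto simp: y\<close>)
        then show ?thesis using b2 c1 by (simp add: of_nat_diff)
      qed
      also have "yH n b \<theta> (b-1) = y2" using b2 by (simp add: y)
      also note s3
      finally have "(\<Sum>u\<in>{u\<in>{0..<n}. {u, v} \<in> H_edges n b}. yH n b \<theta> u) = \<theta>" unfolding N using key1 by simp
      moreover have "yH n b \<theta> v = 1" using c1 by (simp add: y)
      ultimately show ?thesis by simp
    next
      case c2
      have N: "{u\<in>{0..<n}. {u, v} \<in> H_edges n b} = {0..<b-1}"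
        using c2 vn b2 by (auto simp: H_adj)
      have "\<theta> * y2 = real b - 1" unfolding y2_def using thp by simp
      then show ?thesis unfolding N s1 using c2 b2 by (simp add: y)
    next
      case c3
      have N: "{u\<in>{0..<n}. {u, v} \<in> H_edges n b} = {0..<b-1} \<union> ({b..<n} - {v})"
        using c3 vn b2 by (auto simp: H_adj)
      have "(\<Sum>u\<in>{0..<b-1} \<union> ({b..<n} - {v}). yH n b \<theta> u) = (real b - 1) + (real n - real b - 1) * y3"
        using b2 s1 s3'[OF c3 vn] by (subst sum.union_disjoint) auto
      moreover have "yH n b \<theta> v = y3"
      proof -
        have "\<not> v < b - 1" "v \<noteq> b - 1" using c3 b2 by auto
        then show ?thesis by (simp add: y)
      qed
      ultimately show ?thesis unfolding N using ydef3 by simp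
    qed
  qed
  show ?thesis using pos eqs by blast
qed


lemma build_bij:
  fixes V :: "'a set"
  assumes fV: "finite V" and cV: "card V = n" and v0: "v0 \<in> V" and NV: "N \<subseteq> V" and v0N: "v0 \<notin> N"
    and dN: "card N \<le> b - 1" and b2: "2 \<le> b" and bn: "b + 1 \<le> n"
  shows "\<exists>f. bij_betw f V {0..<n} \<and> f v0 = b - 1 \<and> (\<forall>u\<in>N. f u < b - 1)"
proof -
  define d where "d = card N"
  define R where "R = V - N - {v0}"
  have fN: "finite N" using NV fV finite_subset by auto
  have fR: "finite R" using fV R_def by auto
  have cR: "card R = n - 1 - d"
  proof -
    have "card (V - N) = n - d" using card_Diff_subset[OF fN NV] cV d_def by simp
    then show ?thesis unfolding R_def using v0 v0N by (simp add: card_Diff_singleton)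
  qed
  define TR where "TR = {0..<n} - {b - 1} - {0..<d}"
  have cTR: "card TR = n - 1 - d"
  proof -
    have dle: "d \<le> b - 1" using dN d_def by simp
    have "{0..<n} - {b - 1} - {0..<d} = {d..<n} - {b - 1}" by auto
    moreover have "b - 1 \<in> {d..<n}" using dle bn by auto
    ultimately show ?thesis unfolding TR_def by (simp add: card_Diff_singleton)
  qed
  obtain g1 where g1: "bij_betw g1 N {0..<d}" using ex_bij_betw_finite_nat[OF fN] d_def by blast
  have fTR: "finite TR" unfolding TR_def by auto
  obtain g2 where g2: "bij_betw g2 R TR"
    using finite_same_card_bij[OF fR fTR] cR cTR by auto
  define f where "f = (\<lambda>u. if u = v0 then b - 1 else if u \<in> N then g1 u else g2 u)"
  have dle: "d \<le> b - 1" using dN d_def by simp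
  have "bij_betw f V {0..<n}"
  proof -
    have V: "V = insert v0 (N \<union> R)" using v0 NV v0N unfolding R_def by auto
    have b1: "bij_betw f N {0..<d}"
    proof -
      have "\<And>u. u \<in> N \<Longrightarrow> f u = g1 u" unfolding f_def using v0N by auto
      then show ?thesis using g1 bij_betw_cong[of N f g1 "{0..<d}"] by simp
    qed
    have b2': "bij_betw f R TR"
    proof -
      have "\<And>u. u \<in> R \<Longrightarrow> f u = g2 u" unfolding f_def R_def by auto
      then show ?thesis using g2 bij_betw_cong[of R f g2 TR] by simp
    qed
    have b3: "bij_betw f (N \<union> R) ({0..<d} \<union> TR)"
      by (rule bij_betw_combine[OF b1 b2']) (auto simp: R_def TR_def)
    have fv0: "f v0 = b - 1" unfolding f_def by simp
    have "bij_betw f ((N \<union> R) \<union> {v0}) (({0..<d} \<union> TR) \<union> {f v0})"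
    proof (rule notIn_Un_bij_betw[OF _ _ b3])
      show "v0 \<notin> N \<union> R" using v0N unfolding R_def by auto
      show "f v0 \<notin> {0..<d} \<union> TR" using dle fv0 unfolding TR_def by auto
    qed
    then have "bij_betw f (insert v0 (N \<union> R)) (insert (b - 1) ({0..<d} \<union> TR))" using fv0 by simp
    moreover have "insert (b - 1) ({0..<d} \<union> TR) = {0..<n}" using dle bn unfolding TR_def by auto
    ultimately show ?thesis using V by simp
  qed
  moreover have "f v0 = b - 1" unfolding f_def by simp
  moreover have "\<forall>u\<in>N. f u < b - 1"
  proof
    fix u assume "u \<in> N"
    then have "g1 u < d" using g1 by (auto simp: bij_betw_def)
    then show "f u < b - 1" using \<open>u \<in> N\<close> v0N dle unfolding f_def by auto
  qed
  ultimately show ?thesis by blast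
qed


lemma case1_iso:
  fixes V :: "'a set" and E :: "'a set set"
  assumes sg: "simple_graph V E" and cV: "card V = n" and b2: "2 \<le> b" and bn: "b + 1 \<le> n"
    and v0: "v0 \<in> V" and dv0: "card (nbr V E v0) \<le> b - 1"
    and th: "\<theta> > real n - 2" and root: "Hcub n b \<theta> = 0"
    and ev: "adj_eigenvalue V E \<mu>" and mu: "\<theta> \<le> \<mu>"
  shows "graph_iso V E {0..<n} (H_edges n b)"
proof -
  have fV: "finite V" and Esub: "\<forall>e\<in>E. e \<subseteq> V \<and> card e = 2" using sg unfolding simple_graph_def by auto
  define N where "N = nbr V E v0"
  have NV: "N \<subseteq> V" unfolding N_def nbr_def by auto
  have v0N: "v0 \<notin> N"
  proof
    assume "v0 \<in> N"
    then have "{v0} \<in> E" unfolding N_def nbr_def by auto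
    then show False using Esub by fastforce
  qed
  obtain f where bij: "bij_betw f V {0..<n}" and fv0: "f v0 = b - 1" and fN: "\<forall>u\<in>N. f u < b - 1"
    using build_bij[OF fV cV v0 NV v0N _ b2 bn] dv0 N_def by blast
  have finj: "u \<in> V \<Longrightarrow> w \<in> V \<Longrightarrow> f u = f w \<Longrightarrow> u = w" for u w
    using bij unfolding bij_betw_def inj_on_def by blast
  have fn: "u \<in> V \<Longrightarrow> f u < n" for u using bij unfolding bij_betw_def by auto
  define g where "g = inv_into V f"
  have gi: "g i \<in> V" "f (g i) = i" if "i < n" for i
    using bij that unfolding g_def bij_betw_def by (auto intro: inv_into_into f_inv_into_f)
  define H where "H = H_edges n b"
  have GH: "{f u, f w} \<in> H" if uV: "u \<in> V" and wV: "w \<in> V" and e: "{u, w} \<in> E" for u w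
  proof -
    have "card {u, w} = 2" using e Esub by auto
    then have uw: "u \<noteq> w" by auto
    then have fuw: "f u \<noteq> f w" using finj uV wV by blast
    have "f u < b - 1 \<or> f w < b - 1 \<or> (b \<le> f u \<and> b \<le> f w)"
    proof (cases "u = v0")
      case True
      then have "w \<in> N" unfolding N_def nbr_def using wV e by (simp add: insert_commute)
      then show ?thesis using fN by auto
    next
      case False
      note uv0 = False
      show ?thesis
      proof (cases "w = v0")
        case True
        then have "u \<in> N" unfolding N_def nbr_def using uV e by simp
        then show ?thesis using fN by auto
      next
        case False
        have "f u \<noteq> b - 1" "f w \<noteq> b - 1" using finj uV wV v0 fv0 uv0 False by metis+
        then show ?thesis by auto
      qed
    qed
    then show ?thesis unfolding H_def H_adj using fuw fn uV wV by auto
  qed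
  define NH where "NH = (\<lambda>u. {w\<in>V. {f w, f u} \<in> H})"
  define y where "y = (\<lambda>u. yH n b \<theta> (f u))"
  obtain Hp: "\<forall>u<n. yH n b \<theta> u > 0" and Heq: "\<forall>v<n. (\<Sum>u\<in>{u\<in>{0..<n}. {u, v} \<in> H_edges n b}. yH n b \<theta> u) = \<theta> * yH n b \<theta> v"
    using H_eigen[OF b2 bn th root] by blast
  have ypos: "u \<in> V \<Longrightarrow> y u > 0" for u unfolding y_def using Hp fn by auto
  have NHsum: "(\<Sum>w\<in>NH u. y w) = \<theta> * y u" if uV: "u \<in> V" for u
  proof -
    have bb: "bij_betw f (NH u) {i\<in>{0..<n}. {i, f u} \<in> H}"
    proof -
      have "inj_on f (NH u)" using bij unfolding bij_betw_def NH_def by (auto intro: inj_on_subset)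
      moreover have "f ` NH u = {i\<in>{0..<n}. {i, f u} \<in> H}"
      proof
        show "f ` NH u \<subseteq> {i\<in>{0..<n}. {i, f u} \<in> H}" unfolding NH_def using fn by auto
        show "{i\<in>{0..<n}. {i, f u} \<in> H} \<subseteq> f ` NH u"
        proof
          fix i assume "i \<in> {i\<in>{0..<n}. {i, f u} \<in> H}"
          then have "i < n" "{i, f u} \<in> H" by auto
          then have "g i \<in> NH u" "f (g i) = i" using gi unfolding NH_def by auto
          then show "i \<in> f ` NH u" by force
        qed
      qed
      ultimately show ?thesis unfolding bij_betw_def by simp
    qed
    have "(\<Sum>w\<in>NH u. y w) = (\<Sum>i\<in>{i\<in>{0..<n}. {i, f u} \<in> H}. yH n b \<theta> i)"
      unfolding y_def by (rule sum.reindex_bij_betw[OF bb])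
    also have "\<dots> = \<theta> * y u" unfolding y_def H_def using Heq fn[OF uV] by simp
    finally show ?thesis .
  qed
  have nbrNH: "nbr V E u \<subseteq> NH u" if "u \<in> V" for u
    unfolding nbr_def NH_def using GH that by auto
  obtain x where xnz: "\<exists>v\<in>V. x v \<noteq> 0" and eq: "\<forall>v\<in>V. (\<Sum>u\<in>nbr V E v. x u) = \<mu> * x v"
    using ev unfolding adj_eigenvalue_def nbr_def by blast
  define z where "z = (\<lambda>v. \<bar>x v\<bar>)"
  have thp: "\<theta> > 0" using th bn b2 by simp
  have mup: "\<mu> > 0" using thp mu by simp
  have zineq: "\<mu> * z v \<le> (\<Sum>u\<in>nbr V E v. z u)" if "v \<in> V" for v
  proof -
    have "\<mu> * z v = \<bar>\<mu> * x v\<bar>" unfolding z_def using mup by (simp add: abs_mult)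
    also have "\<dots> = \<bar>\<Sum>u\<in>nbr V E v. x u\<bar>" using eq that by simp
    also have "\<dots> \<le> (\<Sum>u\<in>nbr V E v. z u)" unfolding z_def by (rule sum_abs)
    finally show ?thesis .
  qed
  have adjsym: "{u, v} \<in> E \<longleftrightarrow> {v, u} \<in> E" for u v by (simp add: insert_commute)
  have nbrsum: "(\<Sum>u\<in>nbr V E v. h u) = (\<Sum>u\<in>V. if {u, v} \<in> E then h u else 0)" for h :: "'a \<Rightarrow> real" and v
    unfolding nbr_def using sum.inter_filter[OF fV] by simp
  have swapA: "(\<Sum>v\<in>V. y v * (\<Sum>u\<in>nbr V E v. z u)) = (\<Sum>u\<in>V. z u * (\<Sum>v\<in>nbr V E u. y v))"
  proof -
    have "(\<Sum>v\<in>V. y v * (\<Sum>u\<in>nbr V E v. z u)) = (\<Sum>v\<in>V. \<Sum>u\<in>V. if {u, v} \<in> E then y v * z u else 0)"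
      by (simp add: nbrsum sum_distrib_left if_distrib cong: if_cong)
    also have "\<dots> = (\<Sum>u\<in>V. \<Sum>v\<in>V. if {u, v} \<in> E then y v * z u else 0)" by (rule sum.swap)
    also have "\<dots> = (\<Sum>u\<in>V. z u * (\<Sum>v\<in>nbr V E u. y v))"
      by (simp add: nbrsum sum_distrib_left adjsym if_distrib mult.commute cong: if_cong)
    finally show ?thesis .
  qed
  define t1 where "t1 = (\<lambda>v. y v * ((\<Sum>u\<in>nbr V E v. z u) - \<mu> * z v))"
  define t2 where "t2 = (\<lambda>u. z u * ((\<Sum>w\<in>NH u. y w) - (\<Sum>w\<in>nbr V E u. y w)))"
  have t1nn: "v \<in> V \<Longrightarrow> t1 v \<ge> 0" for v unfolding t1_def using ypos zineq
    by (simp add: less_imp_le)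
  have t2nn: "u \<in> V \<Longrightarrow> t2 u \<ge> 0" for u
  proof -
    assume uV: "u \<in> V"
    have fNH: "finite (NH u)" unfolding NH_def using fV by auto
    have "(\<Sum>w\<in>nbr V E u. y w) \<le> (\<Sum>w\<in>NH u. y w)"
      using nbrNH[OF uV] fNH ypos unfolding NH_def by (intro sum_mono2) (auto simp: less_imp_le)
    then show ?thesis unfolding t2_def z_def by simp
  qed
  define S0 where "S0 = (\<Sum>v\<in>V. y v * z v)"
  have "(\<Sum>v\<in>V. t1 v) + (\<Sum>u\<in>V. t2 u) = (\<theta> - \<mu>) * S0"
  proof -
    have "(\<Sum>v\<in>V. t1 v) = (\<Sum>v\<in>V. y v * (\<Sum>u\<in>nbr V E v. z u)) - \<mu> * S0"
      unfolding t1_def S0_def by (simp add: sum_subtractf right_diff_distrib sum_distrib_left algebra_simps)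
    moreover have "(\<Sum>u\<in>V. t2 u) = (\<Sum>u\<in>V. z u * (\<Sum>w\<in>NH u. y w)) - (\<Sum>u\<in>V. z u * (\<Sum>w\<in>nbr V E u. y w))"
      unfolding t2_def by (simp add: sum_subtractf right_diff_distrib)
    moreover have "(\<Sum>u\<in>V. z u * (\<Sum>w\<in>NH u. y w)) = \<theta> * S0"
    proof -
      have "(\<Sum>u\<in>V. z u * (\<Sum>w\<in>NH u. y w)) = (\<Sum>u\<in>V. \<theta> * (y u * z u))"
        by (intro sum.cong) (auto simp: NHsum)
      then show ?thesis unfolding S0_def by (simp add: sum_distrib_left)
    qed
    ultimately show ?thesis using swapA by (simp add: algebra_simps)
  qed
  moreover have "S0 \<ge> 0" unfolding S0_def z_def using ypos by (intro sum_nonneg) (simp add: less_imp_le)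
  ultimately have "(\<Sum>v\<in>V. t1 v) + (\<Sum>u\<in>V. t2 u) \<le> 0" using mu by (simp add: mult_nonpos_nonneg)
  moreover have "(\<Sum>v\<in>V. t1 v) \<ge> 0" "(\<Sum>u\<in>V. t2 u) \<ge> 0" using t1nn t2nn by (auto intro: sum_nonneg)
  ultimately have s1: "(\<Sum>v\<in>V. t1 v) = 0" and s2: "(\<Sum>u\<in>V. t2 u) = 0" by linarith+
  have t1z: "v \<in> V \<Longrightarrow> t1 v = 0" for v using sum_nonneg_eq_0_iff[OF fV] t1nn s1 by blast
  have t2z: "u \<in> V \<Longrightarrow> t2 u = 0" for u using sum_nonneg_eq_0_iff[OF fV] t2nn s2 by blast
  have zeq: "(\<Sum>u\<in>nbr V E v. z u) = \<mu> * z v" if "v \<in> V" for v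
    using t1z[OF that] ypos[OF that] unfolding t1_def by simp
  have NHeq: "NH u = nbr V E u" if uV: "u \<in> V" and zp: "z u > 0" for u
  proof (rule ccontr)
    assume ne: "NH u \<noteq> nbr V E u"
    then obtain w where w: "w \<in> NH u" "w \<notin> nbr V E u" using nbrNH[OF uV] by auto
    have fNH: "finite (NH u)" unfolding NH_def using fV by auto
    have "(\<Sum>w\<in>NH u. y w) = (\<Sum>w\<in>nbr V E u. y w) + (\<Sum>w\<in>NH u - nbr V E u. y w)"
      using sum.subset_diff[OF nbrNH[OF uV] fNH, of y] by simp
    moreover have "(\<Sum>w\<in>NH u - nbr V E u. y w) > 0"
    proof (rule sum_pos2[of _ w])
      show "finite (NH u - nbr V E u)" using fNH by auto
      show "w \<in> NH u - nbr V E u" using w by auto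
      show "0 < y w" using w ypos unfolding NH_def by auto
      show "\<And>i. i \<in> NH u - nbr V E u \<Longrightarrow> 0 \<le> y i" using ypos unfolding NH_def by (auto simp: less_imp_le)
    qed
    ultimately have "t2 u > 0" unfolding t2_def using zp by simp
    then show False using t2z[OF uV] by simp
  qed
  have zpos_nbr: "z u = 0" if "v \<in> V" "z v = 0" "u \<in> nbr V E v" for u v
  proof -
    have fn': "finite (nbr V E v)" unfolding nbr_def using fV by auto
    have "(\<Sum>u\<in>nbr V E v. z u) = 0" using zeq[OF that(1)] that(2) by simp
    moreover have "\<And>u. u \<in> nbr V E v \<Longrightarrow> 0 \<le> z u" unfolding z_def by simp
    ultimately show ?thesis using sum_nonneg_eq_0_iff[OF fn', of z] that(3) by blast
  qed
  obtain u1 where u1: "u1 \<in> V" "z u1 > 0" using xnz unfolding z_def by auto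
  define w0 where "w0 = g 0"
  have n0: "0 < n" using bn by simp
  have w0: "w0 \<in> V" "f w0 = 0" using gi[OF n0] w0_def by auto
  have H0: "v \<in> NH w0" if "v \<in> V" "v \<noteq> w0" for v
  proof -
    have "f v \<noteq> 0" using that w0 finj by metis
    then show ?thesis unfolding NH_def H_def H_adj using that fn w0 n0 b2 by auto
  qed
  have zw0: "z w0 > 0"
  proof (rule ccontr)
    assume "\<not> z w0 > 0"
    then have z0: "z w0 = 0" unfolding z_def by simp
    then have "u1 \<noteq> w0" using u1 by auto
    have "w0 \<in> NH u1"
    proof -
      have "f u1 \<noteq> 0" using \<open>u1 \<noteq> w0\<close> u1 w0 finj by metis
      then show ?thesis unfolding NH_def H_def H_adj using u1 fn w0 b2 n0 by auto
    qed
    then have "w0 \<in> nbr V E u1" using NHeq[OF u1] by simp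
    then have "u1 \<in> nbr V E w0" unfolding nbr_def using u1 by (simp add: insert_commute)
    then have "z u1 = 0" using zpos_nbr[OF w0(1) z0] by simp
    then show False using u1 by simp
  qed
  have zall: "z v > 0" if vV: "v \<in> V" for v
  proof (rule ccontr)
    assume "\<not> z v > 0"
    then have z0: "z v = 0" unfolding z_def by simp
    then have "v \<noteq> w0" using zw0 by auto
    then have "v \<in> nbr V E w0" using H0[OF vV] NHeq[OF w0(1) zw0] by simp
    then have "w0 \<in> nbr V E v" unfolding nbr_def using w0 by (simp add: insert_commute)
    then have "z w0 = 0" using zpos_nbr[OF vV z0] by simp
    then show False using zw0 by simp
  qed
  have "\<forall>u\<in>V. \<forall>v\<in>V. {u, v} \<in> E \<longleftrightarrow> {f u, f v} \<in> H_edges n b"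
  proof (intro ballI)
    fix u v assume uV: "u \<in> V" and vV: "v \<in> V"
    have "NH v = nbr V E v" using NHeq[OF vV zall[OF vV]] .
    then show "{u, v} \<in> E \<longleftrightarrow> {f u, f v} \<in> H_edges n b"
      unfolding NH_def nbr_def H_def using uV by (auto simp: set_eq_iff)
  qed
  then show ?thesis unfolding graph_iso_def using bij by blast
qed


theorem theorem1p8:
  fixes V :: "'a set" and E :: "'a set set" and a b n :: nat
  assumes "simple_graph V E"
    and "1 \<le> a" and "a < b"
    and "card V = n"
    and "real n \<ge> 3 * real b * (real b + real a + 1) / real a + 7"
    and "spectral_radius V E \<ge> spectral_radius {0..<n} (H_edges n b)"
    and "\<not> graph_iso V E {0..<n} (H_edges n b)"
  shows "all_fractional_factors V E a b"
proof -
  note sg = assms(1) and a1 = assms(2) and ab = assms(3) and cV = assms(4) and nb = assms(5)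
    and rho = assms(6) and niso = assms(7)
  have fV: "finite V" and Esub: "\<forall>e\<in>E. e \<subseteq> V \<and> card e = 2" using sg unfolding simple_graph_def by auto
  have fE: "finite E"
  proof -
    have "E \<subseteq> Pow V" using Esub by auto
    then show ?thesis using fV finite_subset by blast
  qed
  have b2: "2 \<le> b" using a1 ab by simp
  have "3 * real b * (real b + real a + 1) / real a \<ge> 3 * real b"
  proof -
    have "(real b + real a + 1) / real a \<ge> 1" using a1 by (simp add: field_simps)
    then have "3 * real b * ((real b + real a + 1) / real a) \<ge> 3 * real b * 1"
      by (intro mult_left_mono) auto
    then show ?thesis by simp
  qed
  then have "real n \<ge> 3 * real b + 7" using nb by linarith
  then have bn: "b + 1 \<le> n" by linarith
  have n0: "0 < n" using bn by simp
  have Vne: "V \<noteq> {}" using cV n0 by auto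
  obtain \<theta> where th: "\<theta> > real n - 2" and root: "Hcub n b \<theta> = 0" using Hcub_root[OF b2 bn] by blast
  obtain Hp: "\<forall>u<n. yH n b \<theta> u > 0" and Heq: "\<forall>v<n. (\<Sum>u\<in>{u\<in>{0..<n}. {u, v} \<in> H_edges n b}. yH n b \<theta> u) = \<theta> * yH n b \<theta> v"
    using H_eigen[OF b2 bn th root] by blast
  have thH: "adj_eigenvalue {0..<n} (H_edges n b) \<theta>"
    unfolding adj_eigenvalue_def
  proof (intro exI[of _ "yH n b \<theta>"] conjI ballI)
    show "\<exists>v\<in>{0..<n}. yH n b \<theta> v \<noteq> 0" using Hp n0 by (intro bexI[of _ 0]) auto
  next
    fix v assume "v \<in> {0..<n}"
    then show "(\<Sum>u\<in>{u\<in>{0..<n}. {u, v} \<in> H_edges n b}. yH n b \<theta> u) = \<theta> * yH n b \<theta> v" using Heq by simp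
  qed
  have finH: "finite {\<mu>. adj_eigenvalue {0..<n} (H_edges n b) \<mu>}"
    using eig_finite_nonempty[of "{0..<n}" "H_edges n b"] n0 by auto
  have rhoH: "spectral_radius {0..<n} (H_edges n b) \<ge> \<theta>"
    unfolding spectral_radius_def using finH thH by (intro Max_ge) auto
  have GS: "finite {\<mu>. adj_eigenvalue V E \<mu>} \<and> {\<mu>. adj_eigenvalue V E \<mu>} \<noteq> {}"
    using eig_finite_nonempty[OF fV Vne] .
  define \<mu> where "\<mu> = spectral_radius V E"
  have muev: "adj_eigenvalue V E \<mu>" unfolding \<mu>_def spectral_radius_def using GS Max_in[of "{\<mu>. adj_eigenvalue V E \<mu>}"] by auto
  have mugt: "\<theta> \<le> \<mu>" using rho rhoH \<mu>_def by simp
  show ?thesis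
    unfolding all_fractional_factors_def
  proof (intro allI impI)
    fix p :: "'a \<Rightarrow> nat"
    assume pb: "\<forall>v\<in>V. 0 < p v \<and> a \<le> p v \<and> p v \<le> b"
    show "has_fractional_p_factor V E p"
    proof (rule ccontr)
      assume nof: "\<not> has_fractional_p_factor V E p"
      show False
      proof (cases "\<exists>v0\<in>V. card (nbr V E v0) \<le> b - 1")
        case True
        then obtain v0 where v0: "v0 \<in> V" "card (nbr V E v0) \<le> b - 1" by blast
        have "graph_iso V E {0..<n} (H_edges n b)"
          by (rule case1_iso[OF sg cV b2 bn v0 th root muev mugt])
        then show False using niso by simp
      next
        case False
        then have degb: "\<forall>v\<in>V. b \<le> card (nbr V E v)" by auto
        have degE: "\<forall>x\<in>V. b \<le> card {e\<in>E. x \<in> e}" using degb card_nbr_eq[OF sg] by simp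
        obtain y where cert: "Fpos E y < (\<Sum>v\<in>V. y v * real (p v))"
        proof -
          have "\<not> (\<exists>w :: 'a set \<Rightarrow> real. (\<forall>e\<in>E. 0 \<le> w e \<and> w e \<le> 1) \<and>
              (\<forall>v\<in>V. (\<Sum>e\<in>{e\<in>E. v \<in> e}. w e) = real (p v)))"
            using nof unfolding has_fractional_p_factor_def by simp
          from certificate[OF fV fE _ this] Esub obtain y where
            "(\<Sum>e\<in>E. max 0 (\<Sum>v\<in>e. y v)) < (\<Sum>v\<in>V. y v * real (p v))" by auto
          then show ?thesis using that unfolding Fpos_def by blast
        qed
        have "(\<Sum>v\<in>V. y v * real (p v)) \<le> Lfun V (real a) (real b) y"
          unfolding Lfun_def
        proof (rule sum_mono)
          fix v assume vV: "v \<in> V"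
          have pa: "real a \<le> real (p v)" "real (p v) \<le> real b" using pb vV by auto
          show "y v * real (p v) \<le> (if y v > 0 then real b * y v else real a * y v)"
          proof (cases "y v > 0")
            case True
            then show ?thesis using pa by (simp add: mult.commute mult_left_mono)
          next
            case False
            then have "y v \<le> 0" by simp
            then have "y v * real (p v) \<le> y v * real a" using pa by (intro mult_left_mono_neg) auto
            then show ?thesis using False by (simp add: mult.commute)
          qed
        qed
        then have "Fpos E y < Lfun V (real a) (real b) y" using cert by linarith
        moreover have edges: "\<forall>e\<in>E. \<exists>u v. u \<noteq> v \<and> e = {u, v} \<and> u \<in> V \<and> v \<in> V"
        proof
          fix e assume "e \<in> E"
          then have "card e = 2" "e \<subseteq> V" using Esub by auto
          then obtain u v where "u \<noteq> v" "e = {u, v}" by (auto simp: card_2_iff)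
          moreover have "u \<in> V" "v \<in> V" using \<open>e \<subseteq> V\<close> \<open>e = {u, v}\<close> by auto
          ultimately show "\<exists>u v. u \<noteq> v \<and> e = {u, v} \<and> u \<in> V \<and> v \<in> V" by (intro exI[of _ u] exI[of _ v]) simp
        qed
        ultimately have exST: "\<exists>S T. S \<subseteq> V \<and> T \<subseteq> V \<and> S \<inter> T = {} \<and> Fpos E (sig S T) < real b * real (card T) - real a * real (card S)"
          using layer[OF fV fE edges] by simp
        then obtain S T where STall: "S \<subseteq> V \<and> T \<subseteq> V \<and> S \<inter> T = {} \<and> Fpos E (sig S T) < real b * real (card T) - real a * real (card S)"
          by (elim exE) 
        then have ST: "S \<subseteq> V" "T \<subseteq> V" "S \<inter> T = {}"
          and fail: "Fpos E (sig S T) < real b * real (card T) - real a * real (card S)" by simp_all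
        have cntE: "card E + (n - 1) \<le> n choose 2"
          by (rule count_fail[OF sg cV ST degE fail a1 ab nb])
        have deg1: "\<forall>v\<in>V. 1 \<le> card (nbr V E v)" using degb b2 by force
        have hg: "\<mu>^2 \<le> 2 * real (card E) - real n + 1" by (rule hong[OF sg cV deg1 muev])
        have "2 * real (card E) + 2 * (real n - 1) \<le> real n * (real n - 1)"
        proof -
          have "real (card E + (n - 1)) \<le> real (n choose 2)" using cntE by (simp only: of_nat_le_iff)
          then have "2 * real (card E + (n - 1)) \<le> real (2 * (n choose 2))" by simp
          also have "\<dots> = real (n * (n - 1))" by (simp only: two_choose2)
          finally show ?thesis using n0 by (simp add: of_nat_diff)
        qed
        then have "\<mu>^2 \<le> (real n - 2)^2 - 1" using hg by (simp add: power2_eq_square algebra_simps)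
        moreover have "(real n - 2)^2 < \<mu>^2"
        proof -
          have "0 \<le> real n - 2" using bn b2 by simp
          moreover have "real n - 2 < \<mu>" using th mugt by simp
          ultimately show ?thesis by (intro power_strict_mono) auto
        qed
        ultimately show False by simp
      qed
    qed
  qed
qed

end
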